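(* Let $\mathcal A=\{A_i\}_{i\in\Lambda}$ be a finite collection of $SL_2(\mathbb R)$ matrices with a strictly invariant multicone $U$, let $\Phi=\{\varphi_{A_i}\}_{i\in\Lambda}$ be the induced IFS on $\mathbb{RP}^1$, and let $p=(p_i)_{i\in\Lambda}$ be a probability vector with all $p_i>0$. Then $\chi_{\Phi,p}=2\chi_{\mathcal A,p}$.
   Context: $\mathbb{RP}^1\cong[0,\pi)\cong\mathbb R/\pi\mathbb Z$; $\varphi_A$ is the induced action and derivatives are in this coordinate. A strictly invariant multicone is a proper nonempty open $U\subset\mathbb{RP}^1$ with finitely many components having disjoint closures and $\varphi_{A_i}(\overline U)\subset U$ for all $i$. Write $A_{\mathbf i}=A_{i_1}\cdots A_{i_n}$ and $\varphi_{\mathbf i}=\varphi_{A_{i_1}}\circ\cdots\circ\varphi_{A_{i_n}}$. With $i_1,i_2,\ldots$ chosen i.i.d. according to $p$: $\chi_{\mathcal A,p}$ is the almost sure value of $\lim_n\frac1n\log\|A_{i_1\cdots i_n}\|$, and, for a fixed $x_0\in U$, $\chi_{\Phi,p}$ is the almost sure value of $\lim_n-\frac1n\log|(\varphi_{i_1\cdots i_n})'(x_0)|$. *)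

theory Defs
  imports "HOL-Probability.Probability"
begin

text \<open>RP^1 is identified with R / pi Z via the angle coordinate theta in [0,pi).
  rp_norm picks the representative in [0,pi).\<close>
definition rp_norm :: "real \<Rightarrow> real" where
  "rp_norm t = t - pi * of_int \<lfloor>t / pi\<rfloor>"

text \<open>Distance on R / pi Z.\<close>
definition rp_dist :: "real \<Rightarrow> real \<Rightarrow> real" where
  "rp_dist a b = \<bar>(a - b) - pi * of_int (round ((a - b) / pi))\<bar>"

text \<open>Induced projective action of a 2x2 matrix, in the angle coordinate.\<close>
definition phi :: "real^2^2 \<Rightarrow> real \<Rightarrow> real" where
  "phi M \<theta> = (let v = M *v vector [cos \<theta>, sin \<theta>] in rp_norm (Arg (Complex (v$1) (v$2))))"

text \<open>Derivative of a self-map of R / pi Z (given by representatives) in the angle coordinate.\<close>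
definition rp_has_deriv :: "(real \<Rightarrow> real) \<Rightarrow> real \<Rightarrow> real \<Rightarrow> bool" where
  "rp_has_deriv g D x \<longleftrightarrow>
     ((\<lambda>h. rp_dist (g (x + h)) (g x + D * h) / \<bar>h\<bar>) \<longlongrightarrow> 0) (at 0)"

definition rp_deriv :: "(real \<Rightarrow> real) \<Rightarrow> real \<Rightarrow> real" where
  "rp_deriv g x = (THE D. rp_has_deriv g D x)"

text \<open>Embedding of RP^1 = R / pi Z onto the unit circle (used for its topology).\<close>
definition rp_emb :: "real \<Rightarrow> complex" where
  "rp_emb \<theta> = cis (2 * \<theta>)"

text \<open>Strictly invariant multicone U (a subset of the unit circle, i.e. of RP^1 via rp_emb).\<close>
definition strictly_invariant_multicone :: "('i \<Rightarrow> real^2^2) \<Rightarrow> complex set \<Rightarrow> bool" where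
  "strictly_invariant_multicone A U \<longleftrightarrow>
     openin (top_of_set (sphere 0 1)) U \<and> U \<noteq> {} \<and> U \<noteq> sphere 0 1 \<and>
     finite (components U) \<and>
     (\<forall>C\<in>components U. \<forall>C'\<in>components U. C \<noteq> C' \<longrightarrow> closure C \<inter> closure C' = {}) \<and>
     (\<forall>i \<theta>. rp_emb \<theta> \<in> closure U \<longrightarrow> rp_emb (phi (A i) \<theta>) \<in> U)"

text \<open>A_{i_1} ... A_{i_n} and phi_{i_1} o ... o phi_{i_n} for the word [i_1,...,i_n].\<close>
definition mat_word :: "('i \<Rightarrow> real^2^2) \<Rightarrow> 'i list \<Rightarrow> real^2^2" where
  "mat_word A is = foldr (\<lambda>i M. A i ** M) is (mat 1)"

definition phi_word :: "('i \<Rightarrow> real^2^2) \<Rightarrow> 'i list \<Rightarrow> real \<Rightarrow> real" where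
  "phi_word A is = foldr (\<lambda>i f. phi (A i) \<circ> f) is id"

end

theory Submission
  imports Defs
begin

(* ---- from Geo.thy ---- *)


definition cpx :: "real^2 \<Rightarrow> complex" where "cpx v = Complex (v$1) (v$2)"
definition sqd :: "real^2 \<Rightarrow> complex" where "sqd v = cpx v / cnj (cpx v)"
definition det2 :: "real^2 \<Rightarrow> real^2 \<Rightarrow> real" where "det2 x y = x$1 * y$2 - x$2 * y$1"
definition uvec :: "real \<Rightarrow> real^2" where "uvec t = vector [cos t, sin t]"
definition perp :: "real^2 \<Rightarrow> real^2" where "perp v = vector [- (v$2), v$1]"
definition rot :: "real \<Rightarrow> real^2 \<Rightarrow> real^2" where "rot t v = cos t *\<^sub>R v + sin t *\<^sub>R perp v"

lemma norm_v2: "norm (v::real^2) = sqrt ((v$1)\<^sup>2 + (v$2)\<^sup>2)"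
  by (simp add: norm_vec_def L2_set_def sum_2)

lemma mv1: "((M::real^2^2) *v v)$1 = M$1$1 * v$1 + M$1$2 * v$2"
  by (simp add: matrix_vector_mult_def sum_2)
lemma mv2: "((M::real^2^2) *v v)$2 = M$2$1 * v$1 + M$2$2 * v$2"
  by (simp add: matrix_vector_mult_def sum_2)

lemma cmod_cpx: "cmod (cpx v) = norm v"
  by (simp add: cpx_def cmod_def norm_v2)

lemma cpx_eq0: "cpx v = 0 \<longleftrightarrow> v = 0"
  by (auto simp: cpx_def complex_eq_iff vec_eq_iff forall_2)

lemma det2_mult: "det2 (M *v x) (M *v y) = det M * det2 x y"
  by (simp add: det2_def mv1 mv2 det_2 algebra_simps)

lemma det2_le: "\<bar>det2 x y\<bar> \<le> norm x * norm y"
proof -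
  have "(det2 x y)\<^sup>2 \<le> ((x$1)\<^sup>2 + (x$2)\<^sup>2) * ((y$1)\<^sup>2 + (y$2)\<^sup>2)"
  proof -
    have "((x$1)\<^sup>2 + (x$2)\<^sup>2) * ((y$1)\<^sup>2 + (y$2)\<^sup>2) - (det2 x y)\<^sup>2 = (x$1*y$1 + x$2*y$2)\<^sup>2"
      unfolding det2_def by (simp add: power2_eq_square algebra_simps)
    then show ?thesis by (metis diff_ge_0_iff_ge zero_le_power2)
  qed
  then have "sqrt ((det2 x y)\<^sup>2) \<le> sqrt (((x$1)\<^sup>2 + (x$2)\<^sup>2) * ((y$1)\<^sup>2 + (y$2)\<^sup>2))"
    using real_sqrt_le_mono by blast
  then show ?thesis by (simp add: norm_v2 real_sqrt_mult)
qed

lemma det2_perp: "det2 v (perp v) = (norm v)\<^sup>2"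
  by (simp add: det2_def perp_def norm_v2 power2_eq_square)

lemma norm_perp: "norm (perp v) = norm v"
  by (simp add: perp_def norm_v2)

lemma decomp: assumes "v \<noteq> 0"
  shows "x = ((x \<bullet> v) / (norm v)\<^sup>2) *\<^sub>R v + (det2 v x / (norm v)\<^sup>2) *\<^sub>R perp v"
proof -
  have n: "(norm v)\<^sup>2 = (v$1)\<^sup>2 + (v$2)\<^sup>2" by (simp add: norm_v2)
  have "(norm v)\<^sup>2 \<noteq> 0" using assms by simp
  then have d: "v$1 * v$1 + v$2 * v$2 \<noteq> 0" using n by (metis power2_eq_square)
  show ?thesis
    unfolding vec_eq_iff forall_2 using n d
    by (simp add: inner_vec_def sum_2 det2_def perp_def power2_eq_square divide_simps) (auto simp add: algebra_simps)
qed

lemma det2_0[simp]: "det2 0 y = 0" "det2 y 0 = 0" by (simp_all add: det2_def)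

lemma mv_nz: assumes "det M \<noteq> 0" "v \<noteq> 0" shows "(M::real^2^2) *v v \<noteq> 0"
proof
  assume "M *v v = 0"
  then have "det2 (M *v v) (M *v perp v) = 0" by simp
  then show False using assms by (simp add: det2_mult det2_perp)
qed

lemma cpx_scale: "cpx (r *\<^sub>R v) = of_real r * cpx v"
  by (simp add: cpx_def complex_eq_iff)
lemma cpx_add: "cpx (x + y) = cpx x + cpx y"
  by (simp add: cpx_def complex_eq_iff)
lemma perp12[simp]: "perp v $ 1 = - (v$2)" "perp v $ 2 = v$1" by (simp_all add: perp_def)
lemma cis_alt: "cis t = complex_of_real (cos t) + \<i> * complex_of_real (sin t)"
  by (simp add: complex_eq_iff)
lemma cpx_perp: "cpx (perp v) = \<i> * cpx v"
  by (simp add: cpx_def perp_def complex_eq_iff)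
lemma cpx_rot: "cpx (rot t v) = cis t * cpx v"
  by (simp add: rot_def cpx_add cpx_scale cpx_perp cis_alt algebra_simps)
lemma cpx_uvec: "cpx (uvec t) = cis t"
  by (simp add: uvec_def cpx_def cis.ctr)

lemma sqd_alt: "sqd v = (cpx v)\<^sup>2 / of_real ((norm v)\<^sup>2)"
proof (cases "cpx v = 0")
  case True then show ?thesis by (simp add: sqd_def)
next
  case False
  have "cpx v * cnj (cpx v) = of_real ((norm v)\<^sup>2)"
    by (metis complex_norm_square cmod_cpx)
  moreover have "cpx v / cnj (cpx v) = (cpx v * cpx v) / (cpx v * cnj (cpx v))"
    using False by simp
  ultimately show ?thesis
    by (simp add: sqd_def power2_eq_square)
qed

lemma sqd_norm: "v \<noteq> 0 \<Longrightarrow> cmod (sqd v) = 1"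
  by (simp add: sqd_def norm_divide)
   (metis cpx_eq0 complex_mod_cnj divide_self_if norm_eq_zero)

lemma sqd_scale: "r \<noteq> 0 \<Longrightarrow> sqd (r *\<^sub>R v) = sqd v"
  by (simp add: sqd_def cpx_scale)

lemma sqd_rot: "sqd (rot t v) = cis (2*t) * sqd v"
proof -
  have "cnj (cis t) = cis (-t)" by (simp add: cis_cnj)
  then have "sqd (rot t v) = (cis t / cis (-t)) * sqd v"
    by (simp add: sqd_def cpx_rot)
  also have "cis t / cis (-t) = cis (2*t)"
    by (simp add: cis_divide)
  finally show ?thesis .
qed

lemma sqd_uvec: "sqd (uvec t) = rp_emb t"
proof -
  have "cnj (cis t) = cis (-t)" by (simp add: cis_cnj)
  then show ?thesis by (simp add: sqd_def cpx_uvec rp_emb_def cis_divide)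
qed

lemma sqd_eq_iff: assumes "x \<noteq> 0" "y \<noteq> 0" shows "sqd x = sqd y \<longleftrightarrow> det2 x y = 0"
proof -
  have cx: "cnj (cpx x) \<noteq> 0" "cnj (cpx y) \<noteq> 0" using assms cpx_eq0 by auto
  have "sqd x = sqd y \<longleftrightarrow> cpx x * cnj (cpx y) = cpx y * cnj (cpx x)"
    using cx by (simp add: sqd_def field_simps)
  also have "\<dots> \<longleftrightarrow> det2 x y = 0"
    by (auto simp: cpx_def det2_def complex_eq_iff algebra_simps)
  finally show ?thesis .
qed

lemma mv_add: "(M::real^2^2) *v (x + y) = M *v x + M *v y"
  by (simp add: matrix_vector_right_distrib)
lemma mv_scale: "(M::real^2^2) *v (r *\<^sub>R x) = r *\<^sub>R (M *v x)"
  by (simp add: matrix_vector_mult_scaleR)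
lemma mv_rot: "(M::real^2^2) *v rot t v = cos t *\<^sub>R (M *v v) + sin t *\<^sub>R (M *v perp v)"
  by (simp add: rot_def mv_add mv_scale)

lemma rp_emb_norm: "rp_emb (rp_norm x) = rp_emb x"
proof -
  have "rp_emb (rp_norm x) = cis (2*x - of_int (\<lfloor>x/pi\<rfloor>) * (2*pi))"
    by (simp add: rp_emb_def rp_norm_def algebra_simps)
  also have "\<dots> = cis (2*x) / cis (2 * pi * of_int \<lfloor>x/pi\<rfloor>)"
    by (simp add: cis_divide mult_ac)
  also have "cis (2 * pi * of_int \<lfloor>x/pi\<rfloor>) = 1" by (rule cis_multiple_2pi) simp
  also have "cis (2*x) / 1 = cis (2*x)" by simp
  finally show ?thesis by (simp add: rp_emb_def)
qed

lemma rp_norm_range: "0 \<le> rp_norm x" "rp_norm x < pi"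
proof -
  have "of_int \<lfloor>x/pi\<rfloor> \<le> x/pi" "x/pi < of_int \<lfloor>x/pi\<rfloor> + 1" by linarith+
  then have "pi * of_int \<lfloor>x/pi\<rfloor> \<le> pi * (x/pi)" "pi * (x/pi) < pi * (of_int \<lfloor>x/pi\<rfloor> + 1)"
    using pi_gt_zero by (intro mult_left_mono mult_strict_left_mono; simp)+
  then have "pi * of_int \<lfloor>x/pi\<rfloor> \<le> x" "x < pi * of_int \<lfloor>x/pi\<rfloor> + pi"
    by (simp_all add: algebra_simps)
  then show "0 \<le> rp_norm x" "rp_norm x < pi" by (simp_all add: rp_norm_def)
qed

lemma cis_eq_cases: assumes "cis a = cis b" obtains n :: int where "a = b + 2 * pi * n"
proof -
  have "sin a = sin b \<and> cos a = cos b" using assms by (metis cis.sel)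
  then show ?thesis using sin_cos_eq_iff that by blast
qed

lemma rp_emb_inj: assumes "0 \<le> a" "a < pi" "0 \<le> b" "b < pi" "rp_emb a = rp_emb b" shows "a = b"
proof -
  have "cis (2*a) = cis (2*b)" using assms(5) by (simp add: rp_emb_def)
  then obtain n :: int where k: "2*a = 2*b + 2 * pi * n" by (rule cis_eq_cases)
  then have "a - b = pi * n" by simp
  moreover have "\<bar>a - b\<bar> < pi" using assms by auto
  ultimately have "\<bar>real_of_int n\<bar> < 1" using pi_gt_zero by (simp add: abs_mult)
  then have "n = 0" by linarith
  then show ?thesis using k by simp
qed

lemma phi_emb: assumes "det M \<noteq> 0" shows "rp_emb (phi M t) = sqd (M *v uvec t)"
proof -
  let ?y = "M *v uvec t"
  have u: "uvec t \<noteq> 0" using cpx_uvec[of t] cpx_eq0 by (metis cis_neq_zero)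
  have y: "cpx ?y \<noteq> 0" using mv_nz[OF assms u] cpx_eq0 by blast
  have e: "vector [cos t, sin t] = uvec t" by (simp add: uvec_def)
  have "rp_emb (phi M t) = rp_emb (Arg (cpx ?y))"
    by (simp add: phi_def Let_def rp_emb_norm e cpx_def)
  also have "\<dots> = (cis (Arg (cpx ?y)))\<^sup>2"
    unfolding rp_emb_def by (simp only: power2_eq_square cis_mult mult_2)
  also have "\<dots> = (sgn (cpx ?y))\<^sup>2" using y by (simp add: cis_Arg)
  also have "\<dots> = (cpx ?y)\<^sup>2 / (complex_of_real (cmod (cpx ?y)))\<^sup>2"
    by (simp add: sgn_eq power_divide)
  also have "\<dots> = sqd ?y"
    unfolding sqd_alt cmod_cpx of_real_power ..
  finally show ?thesis .
qed

lemma phi_range: "0 \<le> phi M t" "phi M t < pi"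
  by (simp_all add: phi_def Let_def rp_norm_range)

lemma phi_comp: assumes "det M \<noteq> 0" "det N \<noteq> 0"
  shows "phi M (phi N t) = phi (M ** N) t"
proof (rule rp_emb_inj[OF phi_range phi_range])
  have u: "\<And>s. uvec s \<noteq> 0" using cpx_uvec cpx_eq0 by (metis cis_neq_zero)
  have dmn: "det (M ** N) \<noteq> 0" using assms by (simp add: det_mul)
  have "sqd (uvec (phi N t)) = sqd (N *v uvec t)" using phi_emb[OF assms(2)] sqd_uvec by simp
  then have "det2 (uvec (phi N t)) (N *v uvec t) = 0"
    using sqd_eq_iff u mv_nz[OF assms(2) u] by blast
  then have "det2 (M *v uvec (phi N t)) (M *v (N *v uvec t)) = 0" by (simp add: det2_mult)
  then have "sqd (M *v uvec (phi N t)) = sqd (M *v (N *v uvec t))"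
    using sqd_eq_iff mv_nz assms u by metis
  then show "rp_emb (phi M (phi N t)) = rp_emb (phi (M ** N) t)"
    using phi_emb assms dmn by (simp add: matrix_vector_mul_assoc)
qed


(* ---- from RpDer.thy ---- *)


lemma rp_dist_min: "rp_dist a b \<le> \<bar>a - b - pi * of_int k\<bar>"
proof -
  have "\<bar>(a-b)/pi - of_int (round ((a-b)/pi))\<bar> \<le> \<bar>(a-b)/pi - of_int k\<bar>"
    by (rule round_diff_minimal)
  then have "pi * \<bar>(a-b)/pi - of_int (round ((a-b)/pi))\<bar> \<le> pi * \<bar>(a-b)/pi - of_int k\<bar>"
    using pi_gt_zero by (intro mult_left_mono) auto
  also have "pi * \<bar>(a-b)/pi - of_int k\<bar> = \<bar>a - b - pi * of_int k\<bar>"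
  proof -
    have "pi * ((a-b)/pi - of_int k) = a - b - pi * of_int k" using pi_gt_zero by (simp add: field_simps)
    moreover have "\<bar>pi * ((a-b)/pi - of_int k)\<bar> = pi * \<bar>(a-b)/pi - of_int k\<bar>"
      using pi_gt_zero by (simp add: abs_mult)
    ultimately show ?thesis by simp
  qed
  also have "pi * \<bar>(a-b)/pi - of_int (round ((a-b)/pi))\<bar> = rp_dist a b"
  proof -
    have "pi * ((a-b)/pi - of_int (round ((a-b)/pi))) = a - b - pi * of_int (round ((a-b)/pi))"
      using pi_gt_zero by (simp add: field_simps)
    moreover have "\<bar>pi * ((a-b)/pi - of_int (round ((a-b)/pi)))\<bar> = pi * \<bar>(a-b)/pi - of_int (round ((a-b)/pi))\<bar>"
      using pi_gt_zero by (simp add: abs_mult)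
    ultimately show ?thesis by (simp add: rp_dist_def)
  qed
  finally show ?thesis .
qed

lemma rp_dist_attain: "\<exists>k::int. rp_dist a b = \<bar>a - b - pi * of_int k\<bar>"
  by (auto simp: rp_dist_def)

lemma rp_dist_le: "rp_dist a b \<le> \<bar>a - b\<bar>"
  using rp_dist_min[of a b 0] by simp

lemma rp_dist_sym: "rp_dist a b = rp_dist b a"
proof -
  obtain k where k: "rp_dist a b = \<bar>a - b - pi * of_int k\<bar>" using rp_dist_attain by blast
  obtain l where l: "rp_dist b a = \<bar>b - a - pi * of_int l\<bar>" using rp_dist_attain by blast
  have "rp_dist a b \<le> \<bar>a - b - pi * of_int (-l)\<bar>" by (rule rp_dist_min)
  also have "\<dots> = rp_dist b a" using l by (simp add: abs_minus_commute algebra_simps)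
  finally have 1: "rp_dist a b \<le> rp_dist b a" .
  have "rp_dist b a \<le> \<bar>b - a - pi * of_int (-k)\<bar>" by (rule rp_dist_min)
  also have "\<dots> = rp_dist a b" using k by (simp add: abs_minus_commute algebra_simps)
  finally show ?thesis using 1 by simp
qed

lemma rp_dist_tri: "rp_dist a c \<le> rp_dist a b + rp_dist b c"
proof -
  obtain k where k: "rp_dist a b = \<bar>a - b - pi * of_int k\<bar>" using rp_dist_attain by blast
  obtain l where l: "rp_dist b c = \<bar>b - c - pi * of_int l\<bar>" using rp_dist_attain by blast
  have "rp_dist a c \<le> \<bar>a - c - pi * of_int (k + l)\<bar>" by (rule rp_dist_min)
  also have "\<dots> \<le> \<bar>a - b - pi * of_int k\<bar> + \<bar>b - c - pi * of_int l\<bar>"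
    by (simp add: algebra_simps)
  finally show ?thesis using k l by simp
qed

lemma rp_dist_shift: "rp_dist (a + pi * of_int k) (b + pi * of_int l) = rp_dist a b"
proof -
  have r: "round ((a + pi * of_int k - (b + pi * of_int l)) / pi) = round ((a - b)/pi) + (k - l)"
  proof -
    have "(a + pi * of_int k - (b + pi * of_int l)) / pi = (a - b)/pi + of_int (k - l)"
      using pi_gt_zero by (simp add: field_simps)
    then have "(a + pi * of_int k - (b + pi * of_int l)) / pi + 1/2 = ((a - b)/pi + 1/2) + of_int (k - l)"
      by simp
    then show ?thesis by (simp only: round_def floor_add_int)
  qed
  show ?thesis unfolding rp_dist_def r by (simp add: algebra_simps)
qed

lemma rp_dist_small: assumes "\<bar>a - b\<bar> < pi/2" shows "rp_dist a b = \<bar>a - b\<bar>"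
proof -
  have "\<bar>(a-b)/pi\<bar> < 1/2" using assms pi_gt_zero by (simp add: abs_divide field_simps)
  then have "0 \<le> (a-b)/pi + 1/2" "(a-b)/pi + 1/2 < 1" by linarith+
  then have "round ((a-b)/pi) = 0" unfolding round_def by (simp add: floor_eq_iff)
  then show ?thesis by (simp add: rp_dist_def)
qed

lemma rp_has_deriv_unique: assumes "rp_has_deriv g D1 x" "rp_has_deriv g D2 x" shows "D1 = D2"
proof -
  let ?f = "\<lambda>h. rp_dist (g (x + h)) (g x + D1 * h) / \<bar>h\<bar> + rp_dist (g (x + h)) (g x + D2 * h) / \<bar>h\<bar>"
  have lim: "(?f \<longlongrightarrow> 0) (at 0)"
    using tendsto_add[OF assms[unfolded rp_has_deriv_def]] by simp
  define e where "e = pi / (2 * (\<bar>D1 - D2\<bar> + 1))"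
  have pos: "2 * (\<bar>D1 - D2\<bar> + 1) > 0" by (smt (verit) abs_ge_zero)
  then have e: "e > 0" using pi_gt_zero unfolding e_def by (rule divide_pos_pos[rotated])
  have ev: "eventually (\<lambda>h. \<bar>D1 - D2\<bar> \<le> ?f h) (at (0::real))"
    unfolding eventually_at
  proof (rule exI[of _ e], intro conjI e ballI impI)
    fix h :: real assume h: "h \<noteq> 0 \<and> dist h 0 < e"
    then have hpos: "\<bar>h\<bar> > 0" "\<bar>h\<bar> < e" by auto
    have "\<bar>D1 - D2\<bar> * \<bar>h\<bar> \<le> (\<bar>D1 - D2\<bar> + 1) * \<bar>h\<bar>"
      by (intro mult_right_mono) auto
    also have "(\<bar>D1 - D2\<bar> + 1) * \<bar>h\<bar> < (\<bar>D1 - D2\<bar> + 1) * e"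
      using hpos by (intro mult_strict_left_mono) auto
    also have "(\<bar>D1 - D2\<bar> + 1) * e = pi/2" using pos unfolding e_def by (simp add: field_simps)
    finally have "\<bar>D1 - D2\<bar> * \<bar>h\<bar> < pi/2" .
    then have "rp_dist (g x + D1 * h) (g x + D2 * h) = \<bar>D1 - D2\<bar> * \<bar>h\<bar>"
      by (subst rp_dist_small) (auto simp: abs_mult[symmetric] algebra_simps)
    moreover have "rp_dist (g x + D1 * h) (g x + D2 * h) \<le>
        rp_dist (g (x + h)) (g x + D1 * h) + rp_dist (g (x + h)) (g x + D2 * h)"
      using rp_dist_tri rp_dist_sym by metis
    ultimately have "\<bar>D1 - D2\<bar> * \<bar>h\<bar> \<le> rp_dist (g (x + h)) (g x + D1 * h) + rp_dist (g (x + h)) (g x + D2 * h)"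
      by simp
    then have "\<bar>D1 - D2\<bar> \<le> (rp_dist (g (x + h)) (g x + D1 * h) + rp_dist (g (x + h)) (g x + D2 * h)) / \<bar>h\<bar>"
      using hpos by (simp add: pos_le_divide_eq)
    then show "\<bar>D1 - D2\<bar> \<le> ?f h" by (simp add: add_divide_distrib)
  qed
  have "\<bar>D1 - D2\<bar> \<le> 0"
    by (rule tendsto_lowerbound[OF lim ev]) simp
  then show ?thesis by simp
qed


(* ---- from PhiDer.thy ---- *)


lemma rp_emb_eq: assumes "rp_emb a = rp_emb b" obtains k :: int where "a = b + pi * of_int k"
proof -
  have "cis (2*a) = cis (2*b)" using assms by (simp add: rp_emb_def)
  then obtain n :: int where "2*a = 2*b + 2 * pi * n" by (rule cis_eq_cases)
  then have "a = b + pi * of_int n" by simp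
  then show ?thesis using that by blast
qed

lemma sqd_cis: assumes "cpx x = of_real c * cis a" "c \<noteq> 0" shows "sqd x = rp_emb a"
proof -
  have "cnj (cis a) = cis (-a)" by (simp add: cis_cnj)
  then have "sqd x = (of_real c * cis a) / (of_real c * cis (-a))"
    by (simp add: sqd_def assms(1))
  also have "\<dots> = cis a / cis (-a)" using assms(2) by simp
  also have "\<dots> = rp_emb a"
  proof -
    have "a - (-a) = 2*a" by simp
    then show ?thesis unfolding rp_emb_def cis_divide by simp
  qed
  finally show ?thesis .
qed

lemma one_plus_i_arctan: "complex_of_real 1 + \<i> * of_real s = of_real (sqrt (1 + s\<^sup>2)) * cis (arctan s)"
proof -
  have pos: "sqrt (1 + s\<^sup>2) > 0" by (simp add: add_pos_nonneg)
  show ?thesis using pos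
    by (simp add: complex_eq_iff cos_arctan sin_arctan)
qed

locale phider =
  fixes M :: "real^2^2" and \<theta> :: real
  assumes detM: "det M = 1"
begin

definition "y = M *v uvec \<theta>"
definition "X1 t = M$1$1 * cos t + M$1$2 * sin t"
definition "X2 t = M$2$1 * cos t + M$2$2 * sin t"
definition "p t = y$1 * X1 t + y$2 * X2 t"
definition "q t = y$1 * X2 t - y$2 * X1 t"
definition "\<beta> = Arg (cpx y)"
definition "g t = \<beta> + arctan (q t / p t)"
definition "ny = (norm y)\<^sup>2"

lemma Mu: "(M *v uvec t)$1 = X1 t" "(M *v uvec t)$2 = X2 t"
  by (simp_all add: mv1 mv2 uvec_def X1_def X2_def)

lemma y_nz: "y \<noteq> 0"
proof -
  have "uvec \<theta> \<noteq> 0" using cpx_uvec cpx_eq0 by (metis cis_neq_zero)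
  then show ?thesis unfolding y_def using mv_nz detM by simp
qed

lemma ny_pos: "ny > 0" using y_nz by (simp add: ny_def)

lemma y12: "y$1 = X1 \<theta>" "y$2 = X2 \<theta>" by (simp_all add: y_def Mu)

lemma ny_alt: "ny = (y$1)\<^sup>2 + (y$2)\<^sup>2" by (simp add: ny_def norm_v2)

lemma p_theta: "p \<theta> = ny" by (simp add: p_def ny_alt y12 power2_eq_square)
lemma q_theta: "q \<theta> = 0" by (simp add: q_def y12)

lemma cpx_y: "cpx y = of_real (norm y) * cis \<beta>"
proof -
  have "cpx y \<noteq> 0" using y_nz cpx_eq0 by simp
  then have "cis \<beta> = cpx y / of_real (norm y)" by (simp add: \<beta>_def cis_Arg sgn_eq cmod_cpx)
  moreover have "norm y \<noteq> 0" using y_nz by simp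
  ultimately show ?thesis by simp
qed

lemma key_cpx: "cpx (M *v uvec t) * of_real ny = (of_real (p t) + \<i> * of_real (q t)) * cpx y"
  by (simp add: cpx_def complex_eq_iff Mu p_def q_def ny_alt power2_eq_square algebra_simps)

lemma emb_g: assumes "p t \<noteq> 0" shows "rp_emb (g t) = rp_emb (phi M t)"
proof -
  define s where "s = q t / p t"
  have pq: "of_real (p t) + \<i> * of_real (q t) = of_real (p t) * (complex_of_real 1 + \<i> * of_real s)"
    using assms by (simp add: s_def complex_eq_iff)
  have "cpx (M *v uvec t) = (of_real (p t) + \<i> * of_real (q t)) * cpx y / of_real ny"
    using key_cpx[of t] ny_pos by (simp add: field_simps)
  also have "\<dots> = of_real (p t * sqrt (1 + s\<^sup>2) * norm y / ny) * (cis (arctan s) * cis \<beta>)"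
    unfolding pq one_plus_i_arctan cpx_y by (simp add: field_simps)
  also have "cis (arctan s) * cis \<beta> = cis (g t)" by (simp add: cis_mult g_def s_def add.commute)
  finally have e: "cpx (M *v uvec t) = of_real (p t * sqrt (1 + s\<^sup>2) * norm y / ny) * cis (g t)" .
  have "(1::real) + s\<^sup>2 \<noteq> 0" by (smt (verit) zero_le_power2)
  then have "p t * sqrt (1 + s\<^sup>2) * norm y / ny \<noteq> 0"
    using assms y_nz ny_pos by simp
  then have "sqd (M *v uvec t) = rp_emb (g t)" using sqd_cis[OF e] by simp
  then show ?thesis using phi_emb detM by simp
qed

definition "X1' t = - M$1$1 * sin t + M$1$2 * cos t"
definition "X2' t = - M$2$1 * sin t + M$2$2 * cos t"

lemma dX1: "(X1 has_real_derivative X1' t) (at t)"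
  unfolding X1_def X1'_def by (auto intro!: derivative_eq_intros)
lemma dX2: "(X2 has_real_derivative X2' t) (at t)"
  unfolding X2_def X2'_def by (auto intro!: derivative_eq_intros)

lemma dp: "(p has_real_derivative (y$1 * X1' t + y$2 * X2' t)) (at t)"
proof -
  have "((\<lambda>t. y$1 * X1 t + y$2 * X2 t) has_real_derivative (y$1 * X1' t + y$2 * X2' t)) (at t)"
    by (intro DERIV_add DERIV_cmult dX1 dX2)
  then show ?thesis by (simp add: p_def[abs_def])
qed

lemma dq: "(q has_real_derivative (y$1 * X2' t - y$2 * X1' t)) (at t)"
proof -
  have "((\<lambda>t. y$1 * X2 t - y$2 * X1 t) has_real_derivative (y$1 * X2' t - y$2 * X1' t)) (at t)"
    by (intro DERIV_diff DERIV_cmult dX1 dX2)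
  then show ?thesis by (simp add: q_def[abs_def])
qed

lemma dq_theta: "y$1 * X2' \<theta> - y$2 * X1' \<theta> = 1"
proof -
  have "y$1 * X2' \<theta> - y$2 * X1' \<theta> = (M$1$1 * M$2$2 - M$1$2 * M$2$1) * ((sin \<theta>)\<^sup>2 + (cos \<theta>)\<^sup>2)"
    by (simp only: y12 X1_def X2_def X1'_def X2'_def) algebra
  also have "\<dots> = 1" using detM by (simp add: det_2)
  finally show ?thesis .
qed

lemma dg: "(g has_real_derivative (1 / ny)) (at \<theta>)"
proof -
  have d1: "((\<lambda>t. q t / p t) has_real_derivative
      ((y$1 * X2' \<theta> - y$2 * X1' \<theta>) * p \<theta> - q \<theta> * (y$1 * X1' \<theta> + y$2 * X2' \<theta>)) / (p \<theta> * p \<theta>)) (at \<theta>)"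
    using ny_pos by (intro DERIV_divide dp dq) (simp add: p_theta)
  have d2: "((\<lambda>t. arctan (q t / p t)) has_real_derivative
      inverse (1 + (q \<theta> / p \<theta>)\<^sup>2) * (((y$1 * X2' \<theta> - y$2 * X1' \<theta>) * p \<theta> - q \<theta> * (y$1 * X1' \<theta> + y$2 * X2' \<theta>)) / (p \<theta> * p \<theta>))) (at \<theta>)"
    by (rule DERIV_chain2[OF DERIV_arctan d1])
  have "inverse (1 + (q \<theta> / p \<theta>)\<^sup>2) * (((y$1 * X2' \<theta> - y$2 * X1' \<theta>) * p \<theta> - q \<theta> * (y$1 * X1' \<theta> + y$2 * X2' \<theta>)) / (p \<theta> * p \<theta>)) = 1 / ny"
    using ny_pos by (simp add: q_theta p_theta dq_theta)
  then have "((\<lambda>t. arctan (q t / p t)) has_real_derivative 1 / ny) (at \<theta>)" using d2 by simp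
  then have "((\<lambda>t. \<beta> + arctan (q t / p t)) has_real_derivative 0 + 1 / ny) (at \<theta>)"
    by (intro DERIV_add DERIV_const)
  then show ?thesis by (simp add: g_def[abs_def])
qed

lemma p_ev: "eventually (\<lambda>h. p (\<theta> + h) > 0) (at 0)"
proof -
  have "isCont p \<theta>" using dp DERIV_isCont by blast
  then have "(p \<longlongrightarrow> p \<theta>) (at \<theta>)" by (simp add: isCont_def)
  then have "((\<lambda>h. p (\<theta> + h)) \<longlongrightarrow> p \<theta>) (at 0)" by (rule LIM_offset_zero)
  moreover have "0 < p \<theta>" using ny_pos p_theta by simp
  ultimately show ?thesis by (rule order_tendstoD(1))
qed

lemma has_deriv: "rp_has_deriv (phi M) (1 / ny) \<theta>"
  unfolding rp_has_deriv_def
proof (rule tendsto_sandwich[where f = "\<lambda>_. 0"])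
  let ?U = "\<lambda>h. \<bar>(g (\<theta> + h) - g \<theta>) / h - 1 / ny\<bar>"
  show "eventually (\<lambda>h. (0::real) \<le> rp_dist (phi M (\<theta> + h)) (phi M \<theta> + 1 / ny * h) / \<bar>h\<bar>) (at 0)"
    by (simp add: rp_dist_def)
  have "((\<lambda>h. (g (\<theta> + h) - g \<theta>) / h) \<longlongrightarrow> 1 / ny) (at 0)" using dg by (simp add: DERIV_def)
  then have "((\<lambda>h. (g (\<theta> + h) - g \<theta>) / h - 1 / ny) \<longlongrightarrow> 0) (at 0)" by (rule LIM_zero)
  then show "(?U \<longlongrightarrow> 0) (at 0)" by (rule tendsto_rabs_zero)
  show "((\<lambda>_. 0) \<longlongrightarrow> (0::real)) (at 0)" by simp
  have ev2: "eventually (\<lambda>h::real. h \<noteq> 0) (at 0)" by (simp add: eventually_at_filter)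
  show "eventually (\<lambda>h. rp_dist (phi M (\<theta> + h)) (phi M \<theta> + 1 / ny * h) / \<bar>h\<bar> \<le> ?U h) (at 0)"
    using p_ev ev2
  proof eventually_elim
    case (elim h)
    have "p (\<theta> + h) \<noteq> 0" using elim by simp
    then have "rp_emb (phi M (\<theta> + h)) = rp_emb (g (\<theta> + h))" using emb_g by simp
    then obtain k1 where k1: "phi M (\<theta> + h) = g (\<theta> + h) + pi * of_int k1"
      by (rule rp_emb_eq)
    have "p \<theta> \<noteq> 0" using p_theta ny_pos by simp
    then have "rp_emb (phi M \<theta>) = rp_emb (g \<theta>)" using emb_g by simp
    then obtain k2 where k2: "phi M \<theta> = g \<theta> + pi * of_int k2"
      by (rule rp_emb_eq)
    have e2: "phi M \<theta> + 1 / ny * h = (g \<theta> + 1 / ny * h) + pi * of_int k2" using k2 by simp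
    have "rp_dist (phi M (\<theta> + h)) (phi M \<theta> + 1 / ny * h) = rp_dist (g (\<theta> + h)) (g \<theta> + 1 / ny * h)"
      unfolding k1 e2 rp_dist_shift ..
    also have "\<dots> \<le> \<bar>g (\<theta> + h) - (g \<theta> + 1 / ny * h)\<bar>" by (rule rp_dist_le)
    finally have "rp_dist (phi M (\<theta> + h)) (phi M \<theta> + 1 / ny * h) / \<bar>h\<bar> \<le> \<bar>g (\<theta> + h) - (g \<theta> + 1 / ny * h)\<bar> / \<bar>h\<bar>"
      by (simp add: divide_right_mono)
    also have "\<bar>g (\<theta> + h) - (g \<theta> + 1 / ny * h)\<bar> / \<bar>h\<bar> = \<bar>(g (\<theta> + h) - (g \<theta> + 1 / ny * h)) / h\<bar>"
      by (simp only: abs_divide)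
    also have "(g (\<theta> + h) - (g \<theta> + 1 / ny * h)) / h = (g (\<theta> + h) - g \<theta>) / h - 1 / ny"
      using elim by (simp add: field_simps)
    finally show ?case .
  qed
qed

lemma deriv_phi: "rp_deriv (phi M) \<theta> = 1 / (norm (M *v uvec \<theta>))\<^sup>2"
proof -
  have "(THE D. rp_has_deriv (phi M) D \<theta>) = 1 / ny"
    by (rule the_equality[where P = "\<lambda>D. rp_has_deriv (phi M) D \<theta>", OF has_deriv])
       (rule rp_has_deriv_unique[OF _ has_deriv])
  then show ?thesis by (simp add: rp_deriv_def ny_def y_def)
qed

end

lemma rp_deriv_phi: assumes "det M = 1" shows "rp_deriv (phi M) t = 1 / (norm (M *v uvec t))\<^sup>2"
proof -
  interpret phider M t using assms by unfold_locales
  show ?thesis by (rule deriv_phi)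
qed


(* ---- from Key.thy ---- *)


lemma det2_lin2: "det2 z (a *\<^sub>R x + b *\<^sub>R y) = a * det2 z x + b * det2 z y"
  by (simp add: det2_def algebra_simps)

lemma det2_swap: "det2 x y = - det2 y x" by (simp add: det2_def)

lemma G_core: assumes "0 < d" "d < pi/2" "\<bar>a\<bar> < tan d * \<bar>b\<bar>"
  shows "\<exists>t. \<bar>t\<bar> < d \<and> cos t * a + sin t * b = 0"
proof -
  have td: "tan d > 0" using assms by (simp add: tan_gt_zero)
  have b: "b \<noteq> 0" using assms(3) by auto
  define r where "r = - a / b"
  have r: "\<bar>r\<bar> < tan d" using assms(3) b by (simp add: r_def abs_divide pos_divide_less_eq)
  define t where "t = arctan r"
  have "arctan \<bar>r\<bar> < arctan (tan d)" using r by (simp add: arctan_less_iff)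
  also have "arctan (tan d) = d" using assms by (intro arctan_tan) auto
  finally have "\<bar>t\<bar> < d" unfolding t_def by (metis abs_if arctan_minus arctan_less_iff arctan_zero_zero)
  moreover have "cos t * a + sin t * b = 0"
  proof -
    have c: "cos t \<noteq> 0" by (simp add: t_def)
    have "sin t = r * cos t" using tan_arctan[of r] c by (simp add: t_def tan_def field_simps)
    then show ?thesis using b by (simp add: r_def field_simps)
  qed
  ultimately show ?thesis by blast
qed

lemma nrm_bound: "norm ((M::real^2^2) *v x) \<le> onorm ((*v) M) * norm x"
  by (rule onorm[OF matrix_vector_mul_bounded_linear])

lemma nrm_mul: "onorm ((*v) ((M::real^2^2) ** N)) \<le> onorm ((*v) M) * onorm ((*v) N)"
proof -
  have "(*v) (M ** N) = (*v) M \<circ> (*v) N" by (auto simp: matrix_vector_mul_assoc)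
  then show ?thesis using onorm_compose[OF matrix_vector_mul_bounded_linear matrix_vector_mul_bounded_linear] by metis
qed

lemma nrm_nonneg: "0 \<le> onorm ((*v) (M::real^2^2))"
  by (rule onorm_pos_le[OF matrix_vector_mul_bounded_linear])

lemma det1_lower: assumes "det M = 1" shows "norm v \<le> onorm ((*v) (M::real^2^2)) * norm (M *v v)"
proof -
  have "(norm v)\<^sup>2 = \<bar>det2 (M *v v) (M *v perp v)\<bar>" by (simp add: det2_mult assms det2_perp)
  also have "\<dots> \<le> norm (M *v v) * norm (M *v perp v)" by (rule det2_le)
  also have "\<dots> \<le> norm (M *v v) * (onorm ((*v) M) * norm v)"
    using nrm_bound[of M "perp v"] by (intro mult_left_mono) (auto simp: norm_perp)
  finally have "norm v * norm v \<le> (onorm ((*v) M) * norm (M *v v)) * norm v"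
    by (simp add: power2_eq_square algebra_simps)
  then show ?thesis
    by (cases "norm v = 0") (auto simp: mult_le_cancel_right)
qed

lemma nrm_ge1: assumes "det M = 1" shows "1 \<le> onorm ((*v) (M::real^2^2))"
proof -
  define v :: "real^2" where "v = vector [1, 0]"
  have nv: "norm v = 1" by (simp add: v_def norm_v2)
  have "1 \<le> onorm ((*v) M) * norm (M *v v)" using det1_lower[OF assms, of v] nv by simp
  also have "\<dots> \<le> onorm ((*v) M) * onorm ((*v) M)"
    using nrm_bound[of M v] nv nrm_nonneg by (intro mult_left_mono) auto
  finally have "1 \<le> (onorm ((*v) M))\<^sup>2" by (simp add: power2_eq_square)
  then show ?thesis using power2_le_imp_le[of 1 "onorm ((*v) M)"] nrm_nonneg[of M] by simp
qed

lemma G: fixes M :: "real^2^2" and v z1 z2 :: "real^2"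
  assumes v: "v \<noteq> 0" and d: "0 < d" "d < pi/2" and z: "norm z1 = 1" "norm z2 = 1" "det2 z1 z2 \<noteq> 0"
    and H: "\<And>t. \<bar>t\<bar> < d \<Longrightarrow> det2 z1 (M *v rot t v) \<noteq> 0 \<and> det2 z2 (M *v rot t v) \<noteq> 0"
  shows "min (1/2) (\<bar>det2 z1 z2\<bar> * tan d / 4) * onorm ((*v) M) * norm v \<le> norm (M *v v)"
proof (rule ccontr)
  define N where "N = onorm ((*v) M)"
  define P where "P = M *v v"
  define Q where "Q = M *v perp v"
  define s where "s = \<bar>det2 z1 z2\<bar>"
  define c where "c = min (1/2) (s * tan d / 4)"
  have s: "s > 0" using z by (simp add: s_def)
  have td: "tan d > 0" using d by (simp add: tan_gt_zero)
  have nv: "norm v > 0" using v by simp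
  have N0: "N \<ge> 0" by (simp add: N_def nrm_nonneg)
  assume "\<not> c * N * norm v \<le> norm P"
  then have Psmall: "norm P < c * N * norm v" unfolding c_def s_def N_def P_def by simp
  have Nb: "N * norm v \<le> norm P + norm Q"
  proof -
    have "N \<le> (norm P + norm Q) / norm v"
      unfolding N_def
    proof (rule onorm_le)
      fix x :: "real^2"
      have "M *v x = ((x \<bullet> v) / (norm v)\<^sup>2) *\<^sub>R P + (det2 v x / (norm v)\<^sup>2) *\<^sub>R Q"
        using decomp[OF v, of x] unfolding P_def Q_def
        by (metis matrix_vector_right_distrib matrix_vector_mult_scaleR)
      then have "norm (M *v x) \<le> norm (((x \<bullet> v) / (norm v)\<^sup>2) *\<^sub>R P) + norm ((det2 v x / (norm v)\<^sup>2) *\<^sub>R Q)"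
        by (metis norm_triangle_ineq)
      also have "\<dots> = \<bar>x \<bullet> v\<bar> / (norm v)\<^sup>2 * norm P + \<bar>det2 v x\<bar> / (norm v)\<^sup>2 * norm Q"
        by (simp add: abs_divide)
      also have "\<dots> \<le> (norm x * norm v) / (norm v)\<^sup>2 * norm P + (norm x * norm v) / (norm v)\<^sup>2 * norm Q"
        using Cauchy_Schwarz_ineq2[of x v] det2_le[of v x]
        by (intro add_mono mult_right_mono divide_right_mono) (auto simp: mult.commute)
      also have "\<dots> = (norm P + norm Q) / norm v * norm x"
        using nv by (simp add: power2_eq_square field_simps)
      finally show "norm (M *v x) \<le> (norm P + norm Q) / norm v * norm x" .
    qed
    then show ?thesis using nv by (simp add: pos_le_divide_eq)
  qed
  have c2: "c \<le> 1/2" by (simp add: c_def)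
  have cs: "c \<le> s * tan d / 4" by (simp add: c_def)
  have Qbig: "N * norm v < 2 * norm Q"
  proof -
    have "c * N * norm v \<le> (1/2) * (N * norm v)" using c2 N0 nv
      by (metis mult.assoc mult_right_mono zero_le_mult_iff less_imp_le)
    then show ?thesis using Nb Psmall by linarith
  qed
  have cram: "det2 z1 z2 *\<^sub>R Q = det2 Q z2 *\<^sub>R z1 + det2 z1 Q *\<^sub>R z2"
    by (simp add: vec_eq_iff forall_2 det2_def algebra_simps)
  have "s * norm Q \<le> \<bar>det2 Q z2\<bar> + \<bar>det2 z1 Q\<bar>"
  proof -
    have "s * norm Q = norm (det2 z1 z2 *\<^sub>R Q)" by (simp add: s_def)
    also have "\<dots> \<le> norm (det2 Q z2 *\<^sub>R z1) + norm (det2 z1 Q *\<^sub>R z2)" unfolding cram by (rule norm_triangle_ineq)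
    also have "\<dots> = \<bar>det2 Q z2\<bar> + \<bar>det2 z1 Q\<bar>" using z by simp
    finally show ?thesis .
  qed
  then have "\<exists>z. (z = z1 \<or> z = z2) \<and> s * norm Q \<le> 2 * \<bar>det2 z Q\<bar>"
    using det2_swap[of Q z2] by (cases "\<bar>det2 z1 Q\<bar> \<le> \<bar>det2 z2 Q\<bar>") auto
  then obtain z where zz: "z = z1 \<or> z = z2" and zQ: "s * norm Q \<le> 2 * \<bar>det2 z Q\<bar>" by blast
  have nz: "norm z = 1" using zz z by auto
  have "\<bar>det2 z P\<bar> < tan d * \<bar>det2 z Q\<bar>"
  proof -
    have "\<bar>det2 z P\<bar> \<le> norm P" using det2_le[of z P] nz by simp
    also have "\<dots> < c * N * norm v" by (rule Psmall)
    also have "\<dots> \<le> (s * tan d / 4) * (N * norm v)" using cs N0 nv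
      by (metis mult.assoc mult_right_mono zero_le_mult_iff less_imp_le)
    also have "\<dots> \<le> (s * tan d / 4) * (2 * norm Q)" using Qbig s td
      by (intro mult_left_mono) auto
    also have "\<dots> = tan d / 2 * (s * norm Q)" by (simp add: algebra_simps)
    also have "\<dots> \<le> tan d / 2 * (2 * \<bar>det2 z Q\<bar>)" using zQ td by (intro mult_left_mono) auto
    finally show ?thesis by simp
  qed
  then obtain t where t: "\<bar>t\<bar> < d" "cos t * det2 z P + sin t * det2 z Q = 0"
    using G_core[OF d] by blast
  have "det2 z (M *v rot t v) = 0"
    using t(2) by (simp add: mv_rot det2_lin2 P_def Q_def)
  then show False using H[OF t(1)] zz by auto
qed


(* ---- from Cone.thy ---- *)


lemma cpx_inj: "cpx x = cpx y \<Longrightarrow> x = y"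
  by (simp add: cpx_def complex_eq_iff vec_eq_iff forall_2)

lemma polar: assumes "v \<noteq> 0" shows "v = norm v *\<^sub>R uvec (Arg (cpx v))"
proof (rule cpx_inj)
  have z: "cpx v \<noteq> 0" using assms cpx_eq0 by simp
  have "cpx (norm v *\<^sub>R uvec (Arg (cpx v))) = of_real (norm v) * sgn (cpx v)"
    using z by (simp add: cpx_scale cpx_uvec cis_Arg)
  also have "\<dots> = cpx v" using z by (simp add: sgn_eq cmod_cpx[symmetric])
  finally show "cpx v = cpx (norm v *\<^sub>R uvec (Arg (cpx v)))" by simp
qed

lemma uvec_nz: "uvec t \<noteq> 0" using cpx_uvec cpx_eq0 by (metis cis_neq_zero)
lemma norm_uvec: "norm (uvec t) = 1" using cmod_cpx[of "uvec t"] by (simp add: cpx_uvec)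

lemma sqd_sphere: assumes "cmod z = 1" shows "sqd (uvec (Arg z / 2)) = z"
proof -
  have z: "z \<noteq> 0" using assms by auto
  have "sqd (uvec (Arg z / 2)) = cis (Arg z)" by (simp add: sqd_uvec rp_emb_def)
  also have "\<dots> = z" using z assms by (simp add: cis_Arg sgn_eq)
  finally show ?thesis .
qed

lemma norm_rot: "norm (rot t v) = norm v"
  by (metis cmod_cpx cpx_rot norm_cis norm_mult mult_1)

lemma cis_sub1: "cmod (cis a - 1) \<le> \<bar>a\<bar>"
proof -
  have "(cmod (cis a - 1))\<^sup>2 = (cos a - 1)\<^sup>2 + (sin a)\<^sup>2"
    by (simp add: cmod_power2)
  also have "\<dots> = 2 - 2 * cos a" by (simp add: power2_eq_square algebra_simps sin_squared_eq)
  also have "cos a = cos (2 * (a/2))" by simp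
  also have "\<dots> = 1 - 2 * (sin (a/2))\<^sup>2" by (rule cos_double_sin)
  finally have "(cmod (cis a - 1))\<^sup>2 = (2 * sin (a/2))\<^sup>2" by (simp add: power2_eq_square)
  then have "cmod (cis a - 1) = \<bar>2 * sin (a/2)\<bar>" by (metis abs_norm_cancel power2_abs power2_eq_iff_nonneg abs_ge_zero norm_ge_zero)
  also have "\<dots> \<le> 2 * \<bar>a/2\<bar>" using abs_sin_x_le_abs_x[of "a/2"] by (simp add: abs_mult)
  finally show ?thesis by simp
qed

lemma bl_cpx: "bounded_linear cpx"
proof (rule bounded_linear_intro[where K=1])
  show "cpx (x + y) = cpx x + cpx y" for x y by (rule cpx_add)
  show "cpx (r *\<^sub>R x) = r *\<^sub>R cpx x" for r x by (subst cpx_scale) (simp add: scaleR_conv_of_real)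
  show "norm (cpx x) \<le> norm x * 1" for x by (simp add: cmod_cpx)
qed

lemma cont_sqd: "continuous_on {v. v \<noteq> 0} sqd"
proof -
  have c1: "continuous_on {v. v \<noteq> 0} cpx" by (rule linear_continuous_on[OF bl_cpx])
  have c2: "continuous_on {v. v \<noteq> 0} (\<lambda>v. cnj (cpx v))"
    by (rule continuous_on_compose2[OF linear_continuous_on[OF bounded_linear_cnj] c1]) auto
  show ?thesis unfolding sqd_def[abs_def]
    by (rule continuous_on_divide[OF c1 c2]) (auto simp: cpx_eq0)
qed

lemma cmod_rot1: assumes "cmod z = 1" shows "cmod (w * z - z) = cmod (w - 1)"
proof -
  have "w * z - z = (w - 1) * z" by (simp add: algebra_simps)
  then show ?thesis using assms by (simp add: norm_mult)
qed

lemma mw_Nil: "mat_word A [] = mat 1" by (simp add: mat_word_def)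
lemma mw_Cons: "mat_word A (i # w) = A i ** mat_word A w" by (simp add: mat_word_def)
lemma mw_append: "mat_word A (xs @ ys) = mat_word A xs ** mat_word A ys"
  by (induction xs) (simp_all add: mw_Nil mw_Cons matrix_mul_assoc)
lemma mw_single: "mat_word A [i] = A i" by (simp add: mat_word_def)

locale mc =
  fixes A :: "'i::finite \<Rightarrow> real^2^2" and U :: "complex set"
  assumes detA: "\<And>i. det (A i) = 1"
    and sim: "strictly_invariant_multicone A U"
begin

lemma det_mw: "det (mat_word A w) = 1"
  by (induction w) (simp_all add: mw_Nil mw_Cons det_mul detA det_I)

lemma U_open: "openin (top_of_set (sphere 0 1)) U" using sim by (simp add: strictly_invariant_multicone_def)
lemma U_ne: "U \<noteq> {}" using sim by (simp add: strictly_invariant_multicone_def)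
lemma U_ns: "U \<noteq> sphere 0 1" using sim by (simp add: strictly_invariant_multicone_def)
lemma U_inv: "rp_emb t \<in> closure U \<Longrightarrow> rp_emb (phi (A i) t) \<in> U"
  using sim by (simp add: strictly_invariant_multicone_def)

lemma U_sub: "U \<subseteq> sphere 0 1" using openin_subset[OF U_open] by simp
lemma clU_sub: "closure U \<subseteq> sphere 0 1" using U_sub closure_minimal closed_sphere by blast

lemma inv1: assumes "v \<noteq> 0" "sqd v \<in> closure U" shows "sqd (A i *v v) \<in> U"
proof -
  define t where "t = Arg (cpx v)"
  have v: "v = norm v *\<^sub>R uvec t" using polar[OF assms(1)] by (simp add: t_def)
  have nv: "norm v \<noteq> 0" using assms by simp
  have "sqd v = rp_emb t" using v sqd_scale[OF nv, of "uvec t"] sqd_uvec by metis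
  then have "rp_emb (phi (A i) t) \<in> U" using U_inv assms by simp
  then have "sqd (A i *v uvec t) \<in> U" using phi_emb detA by simp
  moreover have "A i *v v = norm v *\<^sub>R (A i *v uvec t)" by (subst v) (simp add: mv_scale)
  ultimately show ?thesis using sqd_scale[OF nv] by simp
qed

lemma invw: assumes "v \<noteq> 0" "sqd v \<in> U" shows "sqd (mat_word A w *v v) \<in> U"
proof (induction w)
  case Nil then show ?case using assms by (simp add: mw_Nil)
next
  case (Cons i w)
  have "mat_word A w *v v \<noteq> 0" using mv_nz[of "mat_word A w" v] det_mw assms by simp
  moreover have "sqd (mat_word A w *v v) \<in> closure U" using Cons closure_subset by blast
  ultimately have "sqd (A i *v (mat_word A w *v v)) \<in> U" by (rule inv1)
  then show ?case by (simp add: mw_Cons matrix_vector_mul_assoc)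
qed

lemma v0_ex: "\<exists>v0. norm v0 = 1 \<and> sqd v0 \<in> U"
proof -
  obtain z where z: "z \<in> U" using U_ne by blast
  then have "cmod z = 1" using U_sub by auto
  then show ?thesis using z sqd_sphere norm_uvec by metis
qed

lemma sqd_surj: assumes "cmod z = 1" shows "\<exists>v. v \<noteq> 0 \<and> sqd (A i *v v) = z"
proof -
  define y where "y = uvec (Arg z / 2)"
  define M where "M = A i"
  define v :: "real^2" where "v = vector [M$2$2 * y$1 - M$1$2 * y$2, - M$2$1 * y$1 + M$1$1 * y$2]"
  have "M *v v = y" using detA[of i]
    by (simp add: v_def M_def[symmetric] vec_eq_iff forall_2 mv1 mv2 det_2 algebra_simps)
  then have "M *v v = y" .
  moreover have "v \<noteq> 0" using \<open>M *v v = y\<close> uvec_nz y_def by force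
  ultimately show ?thesis using sqd_sphere[OF assms] y_def M_def by metis
qed

lemma clU_ns: "closure U \<noteq> sphere 0 1"
proof
  assume eq: "closure U = sphere 0 1"
  obtain q where q: "q \<in> sphere 0 1" "q \<notin> U" using U_sub U_ns by blast
  obtain v where v: "v \<noteq> 0" "sqd (A undefined *v v) = q" using sqd_surj q by auto
  have "sqd v \<in> closure U" using eq sqd_norm[OF v(1)] by simp
  then have "sqd (A undefined *v v) \<in> U" by (rule inv1[OF v(1)])
  then show False using v q by simp
qed

lemma holes: "\<exists>z1 z2. norm z1 = 1 \<and> norm z2 = 1 \<and> det2 z1 z2 \<noteq> 0 \<and> sqd z1 \<notin> U \<and> sqd z2 \<notin> U"
proof -
  obtain q where q: "q \<in> sphere 0 1" "q \<notin> closure U" using clU_ns clU_sub by blast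
  have "open (- closure U)" by (intro open_Compl closed_closure)
  then obtain e where e: "e > 0" "ball q e \<subseteq> - closure U" using q open_contains_ball by blast
  define z1 where "z1 = uvec (Arg q / 2)"
  define s where "s = min (e/4) 1"
  define z2 where "z2 = rot s z1"
  have s: "0 < s" "s \<le> 1" "s \<le> e/4" using e by (auto simp: s_def)
  have n1: "norm z1 = 1" by (simp add: z1_def norm_uvec)
  have n2: "norm z2 = 1" using n1 by (simp add: z2_def norm_rot)
  have sq1: "sqd z1 = q" using q by (simp add: z1_def sqd_sphere)
  have sq2: "sqd z2 = cis (2 * s) * q" by (simp add: z2_def sqd_rot sq1)
  have "dist (cis (2 * s) * q) q = cmod (cis (2 * s) - 1)"
    using q by (simp add: dist_norm cmod_rot1)
  also have "\<dots> \<le> \<bar>2 * s\<bar>" by (rule cis_sub1)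
  also have "\<dots> < e" using s e by auto
  finally have "sqd z2 \<in> ball q e" by (simp add: sq2 dist_commute)
  then have "sqd z2 \<notin> closure U" using e by auto
  moreover have "sqd z1 \<notin> closure U" using q sq1 by simp
  moreover have "det2 z1 z2 = sin s"
    using n1 by (simp add: z2_def rot_def det2_lin2 det2_perp det2_def[of z1 z1])
  moreover have "sin s > 0" using s pi_gt3 by (intro sin_gt_zero) auto
  ultimately show ?thesis using n1 n2 closure_subset by (metis less_irrefl subsetD)
qed

lemma unif_delta: "\<exists>d>0. d < pi/2 \<and> (\<forall>i v t. v \<noteq> 0 \<longrightarrow> sqd v \<in> closure U \<longrightarrow> \<bar>t\<bar> < d \<longrightarrow> sqd (rot t (A i *v v)) \<in> U)"
proof -
  define V where "V = sphere (0::real^2) 1 \<inter> sqd -` closure U"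
  have sph: "sphere (0::real^2) 1 \<subseteq> {v. v \<noteq> 0}" by auto
  have csph: "continuous_on (sphere (0::real^2) 1) sqd" using continuous_on_subset[OF cont_sqd sph] .
  have "closed V" unfolding V_def by (rule continuous_closed_preimage[OF csph]) auto
  moreover have "bounded V" unfolding V_def by (rule bounded_subset[of "sphere 0 1"]) auto
  ultimately have cV: "compact V" by (simp add: compact_eq_bounded_closed)
  define W where "W = (\<Union>i\<in>UNIV. (\<lambda>v. sqd (A i *v v)) ` V)"
  have "compact W" unfolding W_def
  proof (rule compact_UN)
    show "finite (UNIV :: 'i set)" by simp
  next
    fix i
    have "continuous_on V (\<lambda>v. sqd (A i *v v))"
    proof (rule continuous_on_compose2[OF cont_sqd])
      show "continuous_on V ((*v) (A i))" by (rule linear_continuous_on) simp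
      show "(*v) (A i) ` V \<subseteq> {v. v \<noteq> 0}"
      proof clarify
        fix x assume "x \<in> V" "A i *v x = 0"
        then have "x \<noteq> 0" by (auto simp: V_def)
        then show False using mv_nz[of "A i" x] detA[of i] \<open>A i *v x = 0\<close> by simp
      qed
    qed
    then show "compact ((\<lambda>v. sqd (A i *v v)) ` V)" using cV by (rule compact_continuous_image)
  qed
  obtain T where T: "open T" "U = sphere 0 1 \<inter> T" using U_open by (auto simp: openin_open)
  have "W \<subseteq> U"
  proof
    fix z assume "z \<in> W"
    then obtain i v where v: "v \<in> V" "z = sqd (A i *v v)" by (auto simp: W_def)
    then have "v \<noteq> 0" "sqd v \<in> closure U" by (auto simp: V_def)
    then show "z \<in> U" using inv1 v by simp
  qed
  then have "W \<subseteq> T" using T by auto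
  then obtain e where e: "e > 0" "(\<Union>x\<in>W. ball x e) \<subseteq> T"
    using compact_subset_open_imp_ball_epsilon_subset[OF \<open>compact W\<close> T(1)] by blast
  define d where "d = min (e/2) 1"
  have d: "d > 0" "d < pi/2" "d \<le> e/2" using e pi_gt3 by (auto simp: d_def)
  have "sqd (rot t (A i *v v)) \<in> U" if v: "v \<noteq> 0" "sqd v \<in> closure U" and t: "\<bar>t\<bar> < d" for i v t
  proof -
    have nv: "norm v \<noteq> 0" "1 / norm v \<noteq> 0" using v by auto
    define v' where "v' = (1 / norm v) *\<^sub>R v"
    have "v' \<in> V" using v nv by (simp add: V_def v'_def sqd_scale)
    then have W: "sqd (A i *v v') \<in> W" unfolding W_def by blast
    have x: "A i *v v = norm v *\<^sub>R (A i *v v')" using nv by (simp add: v'_def mv_scale)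
    have sx: "sqd (A i *v v) = sqd (A i *v v')" using x sqd_scale nv by simp
    have xnz: "A i *v v \<noteq> 0" using mv_nz detA v by simp
    have n1: "cmod (sqd (A i *v v)) = 1" using sqd_norm[OF xnz] .
    have "dist (sqd (rot t (A i *v v))) (sqd (A i *v v)) = cmod (cis (2*t) - 1)"
      using n1 by (simp add: sqd_rot dist_norm cmod_rot1)
    also have "\<dots> \<le> \<bar>2*t\<bar>" by (rule cis_sub1)
    also have "\<dots> < e" using t d by auto
    finally have "dist (sqd (A i *v v')) (sqd (rot t (A i *v v))) < e" using sx by (simp add: dist_commute)
    then have "sqd (rot t (A i *v v)) \<in> (\<Union>x\<in>W. ball x e)" using W by auto
    then have "sqd (rot t (A i *v v)) \<in> T" using e(2) by blast
    moreover have "rot t (A i *v v) \<noteq> 0" using xnz norm_rot by (metis norm_eq_zero)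
    ultimately show ?thesis using T sqd_norm by auto
  qed
  then show ?thesis using d by blast
qed

end


(* ---- from Cone2.thy ---- *)


context mc begin

definition "L = Max (range (\<lambda>i. onorm ((*v) (A i))))"

lemma L_ge: "onorm ((*v) (A i)) \<le> L"
  unfolding L_def by (rule Max_ge) auto

lemma L_ge1: "1 \<le> L" using L_ge nrm_ge1[OF detA] order_trans by blast

lemma nrm_id: "onorm ((*v) (mat 1 :: real^2^2)) = 1"
proof -
  have "(*v) (mat 1 :: real^2^2) = (\<lambda>x. x)" by (rule ext) simp
  then show ?thesis by (simp add: onorm_id)
qed

lemma KEY: "\<exists>c>0. c \<le> 1 \<and> (\<forall>w v. v \<noteq> 0 \<longrightarrow> sqd v \<in> closure U \<longrightarrow>
   c * onorm ((*v) (mat_word A w)) * norm v \<le> norm (mat_word A w *v v))"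
proof -
  obtain z1 z2 where z: "norm z1 = 1" "norm z2 = 1" "det2 z1 z2 \<noteq> 0" "sqd z1 \<notin> U" "sqd z2 \<notin> U"
    using holes by blast
  obtain d where d: "d > 0" "d < pi/2"
    and dH: "\<And>i v t. v \<noteq> 0 \<Longrightarrow> sqd v \<in> closure U \<Longrightarrow> \<bar>t\<bar> < d \<Longrightarrow> sqd (rot t (A i *v v)) \<in> U"
    using unif_delta by blast
  define c0 where "c0 = min (1/2) (\<bar>det2 z1 z2\<bar> * tan d / 4)"
  have td: "tan d > 0" using d by (simp add: tan_gt_zero)
  have c0: "c0 > 0" "c0 \<le> 1/2" using td z(3) by (auto simp: c0_def)
  define c where "c = c0 / L\<^sup>2"
  have L2: "L\<^sup>2 \<ge> 1" using L_ge1 by (simp add: one_le_power)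
  have Lp: "L\<^sup>2 > 0" using L2 by linarith
  have c1: "c > 0" using c0 Lp by (simp add: c_def)
  have "c \<le> c0 / 1" unfolding c_def using c0 L2 by (intro divide_left_mono) auto
  then have c: "c > 0" "c \<le> 1" using c1 c0 by auto
  have main: "c * onorm ((*v) (mat_word A w)) * norm v \<le> norm (mat_word A w *v v)"
    if v: "v \<noteq> 0" "sqd v \<in> closure U" for w v
  proof (cases w rule: rev_exhaust)
    case Nil
    have "c * norm v \<le> 1 * norm v" using c by (intro mult_right_mono) auto
    then show ?thesis using c by (simp add: Nil mw_Nil nrm_id)
  next
    case (snoc w' i)
    define M' where "M' = mat_word A w'"
    define v' where "v' = A i *v v"
    have dM': "det M' = 1" by (simp add: M'_def det_mw)
    have v': "v' \<noteq> 0" using mv_nz detA v by (simp add: v'_def)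
    have mw: "mat_word A w = M' ** A i" by (simp add: snoc mw_append mw_single M'_def)
    have G1: "c0 * onorm ((*v) M') * norm v' \<le> norm (M' *v v')"
      unfolding c0_def
    proof (rule G[OF v' d z(1-3)])
      fix t :: real assume t: "\<bar>t\<bar> < d"
      have "sqd (rot t v') \<in> U" using dH[OF v t] by (simp add: v'_def)
      moreover have "rot t v' \<noteq> 0" using v' norm_rot by (metis norm_eq_zero)
      ultimately have sU: "sqd (M' *v rot t v') \<in> U" using invw M'_def by simp
      have xnz: "M' *v rot t v' \<noteq> 0" using mv_nz dM' \<open>rot t v' \<noteq> 0\<close> by simp
      have nz: "z1 \<noteq> 0" "z2 \<noteq> 0" using z by auto
      show "det2 z1 (M' *v rot t v') \<noteq> 0 \<and> det2 z2 (M' *v rot t v') \<noteq> 0"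
        using sqd_eq_iff[OF nz(1) xnz] sqd_eq_iff[OF nz(2) xnz] sU z(4,5) by auto
    qed
    define N' where "N' = onorm ((*v) M')"
    define Ni where "Ni = onorm ((*v) (A i))"
    have N'0: "N' \<ge> 0" by (simp add: N'_def nrm_nonneg)
    have Ni0: "Ni \<ge> 0" by (simp add: Ni_def nrm_nonneg)
    have NiL: "Ni \<le> L" by (simp add: Ni_def L_ge)
    have Nw: "onorm ((*v) (mat_word A w)) \<le> N' * Ni" unfolding mw N'_def Ni_def by (rule nrm_mul)
    have vb: "norm v \<le> Ni * norm v'" unfolding Ni_def v'_def by (rule det1_lower[OF detA])
    have "c * onorm ((*v) (mat_word A w)) * norm v \<le> c * (N' * Ni) * (Ni * norm v')"
      using c Nw vb N'0 Ni0 by (intro mult_mono mult_left_mono) (auto simp: nrm_nonneg)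
    also have "\<dots> = c * N' * norm v' * (Ni * Ni)" by (simp add: algebra_simps)
    also have "\<dots> \<le> c * N' * norm v' * L\<^sup>2"
      using c N'0 NiL Ni0 by (intro mult_left_mono) (auto simp: power2_eq_square intro!: mult_mono)
    also have "\<dots> = c0 * N' * norm v'" using Lp by (simp add: c_def)
    also have "\<dots> \<le> norm (M' *v v')" using G1 by (simp add: N'_def)
    also have "M' *v v' = mat_word A w *v v" by (simp add: mw v'_def matrix_vector_mul_assoc)
    finally show ?thesis .
  qed
  show ?thesis using c main by blast
qed

end


(* ---- from Prob1.thy ---- *)


lemma nats_snth: "nats !! i = i"
  by (induction i) (simp_all add: snth_siterate)

lemma to_stream_snth: "to_stream X !! i = X i"
  by (simp add: to_stream_def nats_snth)

lemma stake_sdrop_map: "stake n (sdrop k w) = map (\<lambda>i. w !! i) [k..<k+n]"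
  by (rule nth_equalityI) (auto simp: sdrop_snth)

locale strm =
  fixes p :: "'i::countable pmf"
begin

definition S where "S = stream_space (measure_pmf p)"

lemma ps_M: "prob_space (measure_pmf p)" by (rule prob_space_measure_pmf)

sublocale S: prob_space S
  unfolding S_def by (rule prob_space.prob_space_stream_space[OF prob_space_measure_pmf])

lemma sets_S: "sets S = sets (stream_space (count_space UNIV))"
  unfolding S_def by (rule sets_stream_space_cong) simp

lemma space_S: "space S = UNIV" by (simp add: S_def space_stream_space)

lemma meas_stake: "stake n \<in> measurable S (count_space UNIV)"
  by (subst measurable_cong_sets[OF sets_S refl]) (rule measurable_stake)

lemma meas_f [measurable]: "(\<lambda>\<omega>. g (stake n \<omega>)) \<in> borel_measurable S" for g :: "'i list \<Rightarrow> real"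
  by (rule measurable_compose[OF meas_stake]) simp

lemma meas_sdrop [measurable]: "sdrop n \<in> measurable S S"
  unfolding S_def by (rule measurable_sdrop)

lemma meas_fs [measurable]: "(\<lambda>\<omega>. g (stake n (sdrop k \<omega>))) \<in> borel_measurable S" for g :: "'i list \<Rightarrow> real"
  by (rule measurable_compose[OF meas_sdrop meas_f])

lemma distr_stl: "distr S S stl = S"
proof (rule measure_eqI)
  show "sets (distr S S stl) = sets S" by simp
  fix A assume A: "A \<in> sets (distr S S stl)"
  then have A': "A \<in> sets (stream_space (measure_pmf p))" by (simp add: S_def)
  have mstl: "stl \<in> measurable S S" unfolding S_def by (rule measurable_stl)
  have "emeasure (distr S S stl) A = emeasure S (stl -` A \<inter> space S)"
    using A mstl by (simp add: emeasure_distr)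
  also have "\<dots> = (\<integral>\<^sup>+t. emeasure S {x\<in>space S. t ## x \<in> stl -` A \<inter> space S} \<partial>measure_pmf p)"
    unfolding S_def
    by (rule prob_space.emeasure_stream_space[OF ps_M])
       (use A mstl in \<open>simp add: S_def[symmetric] measurable_sets\<close>)
  also have "\<dots> = (\<integral>\<^sup>+t. emeasure S A \<partial>measure_pmf p)"
    by (simp add: space_S)
  also have "\<dots> = emeasure S A" by (simp add: measure_pmf.emeasure_space_1)
  finally show "emeasure (distr S S stl) A = emeasure S A" .
qed

lemma distr_sdrop: "distr S S (sdrop n) = S"
proof (induction n)
  case 0 then show ?case by simp
next
  case (Suc n)
  have mstl: "stl \<in> measurable S S" unfolding S_def by (rule measurable_stl)
  have "sdrop (Suc n) = sdrop n \<circ> stl" by (rule ext) simp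
  then have "distr S S (sdrop (Suc n)) = distr S S (sdrop n \<circ> stl)" by (rule arg_cong)
  also have "\<dots> = distr (distr S S stl) S (sdrop n)"
    by (rule distr_distr[symmetric]) (simp_all add: mstl)
  also have "\<dots> = S" using Suc distr_stl by simp
  finally show ?case .
qed

lemma distr_shift: assumes [measurable]: "g \<in> borel_measurable S"
  shows "distr S borel (\<lambda>\<omega>. g (sdrop n \<omega>)) = distr S borel g"
proof -
  have "distr S borel (\<lambda>\<omega>. g (sdrop n \<omega>)) = distr S borel (g \<circ> sdrop n)" by (simp add: comp_def)
  also have "\<dots> = distr (distr S S (sdrop n)) borel g"
    by (rule distr_distr[symmetric]) simp_all
  also have "\<dots> = distr S borel g" by (simp add: distr_sdrop)
  finally show ?thesis .
qed

lemma integral_shift: fixes g :: "'i stream \<Rightarrow> real" assumes [measurable]: "g \<in> borel_measurable S"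
  shows "integral\<^sup>L S (\<lambda>\<omega>. g (sdrop n \<omega>)) = integral\<^sup>L S g"
proof -
  have "integral\<^sup>L S g = integral\<^sup>L (distr S S (sdrop n)) g" by (simp add: distr_sdrop)
  also have "\<dots> = integral\<^sup>L S (\<lambda>\<omega>. g (sdrop n \<omega>))"
    using integral_distr[OF meas_sdrop[of n] assms] by simp
  finally show ?thesis by simp
qed

lemma indep_coord: "S.indep_vars (\<lambda>_. measure_pmf p) (\<lambda>i \<omega>. \<omega> !! i) UNIV"
proof -
  interpret M: prob_space "measure_pmf p" by (rule ps_M)
  interpret P: product_prob_space "\<lambda>_. measure_pmf p" UNIV ..
  let ?P = "\<Pi>\<^sub>M i\<in>UNIV. measure_pmf p"
  have rv: "(\<lambda>\<omega>. \<omega> !! i) \<in> measurable S (measure_pmf p)" for i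
    unfolding S_def by (rule measurable_snth)
  have Seq: "S = distr ?P S to_stream" unfolding S_def by (rule stream_space_eq_distr)
  have mts: "to_stream \<in> measurable ?P S" unfolding S_def by simp
  have msn: "(\<lambda>x. \<lambda>i\<in>UNIV. x !! i) \<in> measurable S ?P"
    unfolding S_def using measurable_snth_PiM by simp
  have "distr S ?P (\<lambda>x. \<lambda>i\<in>UNIV. x !! i) = distr ?P ?P ((\<lambda>x. \<lambda>i\<in>UNIV. x !! i) \<circ> to_stream)"
    by (subst Seq, rule distr_distr[OF msn mts])
  also have "(\<lambda>x. \<lambda>i\<in>UNIV. x !! i) \<circ> to_stream = (\<lambda>x. x)"
    by (rule ext) (simp add: to_stream_snth restrict_def fun_eq_iff)
  finally have L: "distr S ?P (\<lambda>x. \<lambda>i\<in>UNIV. x !! i) = ?P" by (simp only: distr_id)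
  have R: "distr S (measure_pmf p) (\<lambda>\<omega>. \<omega> !! i) = measure_pmf p" for i
  proof -
    have ms: "(\<lambda>\<omega>. \<omega> !! i) \<in> measurable S (measure_pmf p)" unfolding S_def by simp
    have "distr S (measure_pmf p) (\<lambda>\<omega>. \<omega> !! i) = distr ?P (measure_pmf p) ((\<lambda>\<omega>. \<omega> !! i) \<circ> to_stream)"
      by (subst Seq, rule distr_distr[OF ms mts])
    also have "(\<lambda>\<omega>. \<omega> !! i) \<circ> to_stream = (\<lambda>X. X i)" by (rule ext) (simp add: to_stream_snth)
    also have "distr ?P (measure_pmf p) (\<lambda>X. X i) = measure_pmf p" by (rule P.PiM_component) simp
    finally show ?thesis .
  qed
  show ?thesis
  proof (subst S.indep_vars_iff_distr_eq_PiM)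
    show "UNIV \<noteq> {}" by simp
    show "(\<lambda>\<omega>. \<omega> !! i) \<in> measurable S (measure_pmf p)" for i by (rule rv)
    show "distr S (\<Pi>\<^sub>M i\<in>UNIV. measure_pmf p) (\<lambda>x. \<lambda>i\<in>UNIV. x !! i) = (\<Pi>\<^sub>M i\<in>UNIV. distr S (measure_pmf p) (\<lambda>\<omega>. \<omega> !! i))"
      unfolding R L ..
  qed
qed

end


(* ---- from Prob2.thy ---- *)


context strm begin

definition blk :: "nat \<Rightarrow> nat \<Rightarrow> nat set" where "blk m j = {j*m ..< j*m + m}"

lemma blk_disj: assumes "m \<ge> 1" shows "disjoint_family (blk m)"
proof (unfold disjoint_family_on_def, intro ballI impI)
  fix a b :: nat assume "a \<noteq> b"
  then have "a < b \<or> b < a" by arith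
  then show "blk m a \<inter> blk m b = {}"
  proof
    assume "a < b" then have "a * m + m \<le> b * m" using assms
      by (metis Suc_leI add.commute mult_Suc mult_le_mono1)
    then show ?thesis by (auto simp: blk_def)
  next
    assume "b < a" then have "b * m + m \<le> a * m" using assms
      by (metis Suc_leI add.commute mult_Suc mult_le_mono1)
    then show ?thesis by (auto simp: blk_def)
  qed
qed

lemma indep_blocks: fixes g :: "'i list \<Rightarrow> real" assumes m: "m \<ge> 1"
  shows "S.indep_vars (\<lambda>_. borel) (\<lambda>j \<omega>. g (stake m (sdrop (j*m) \<omega>))) UNIV"
proof -
  have I: "S.indep_vars (\<lambda>j. PiM (blk m j) (\<lambda>_. measure_pmf p)) (\<lambda>j \<omega>. restrict (\<lambda>i. \<omega> !! i) (blk m j)) UNIV"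
    by (rule S.indep_vars_restrict[OF indep_coord]) (use blk_disj[OF m] in auto)
  define Y where "Y j h = g (map h [j*m..<j*m+m])" for j and h :: "nat \<Rightarrow> 'i"
  have mY: "Y j \<in> borel_measurable (PiM (blk m j) (\<lambda>_. measure_pmf p))" for j
  proof -
    have "sets (PiM (blk m j) (\<lambda>_. measure_pmf p)) = sets (PiM (blk m j) (\<lambda>_. count_space (UNIV :: 'i set)))"
      by (rule sets_PiM_cong) simp_all
    also have "PiM (blk m j) (\<lambda>_. count_space (UNIV :: 'i set)) = count_space (PiE (blk m j) (\<lambda>_. UNIV))"
      by (rule count_space_PiM_finite) (simp_all add: blk_def)
    finally have e: "sets (PiM (blk m j) (\<lambda>_. measure_pmf p)) = sets (count_space (PiE (blk m j) (\<lambda>_. UNIV :: 'i set)))" .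
    show ?thesis by (subst measurable_cong_sets[OF e refl]) simp
  qed
  have "S.indep_vars (\<lambda>_. borel) (\<lambda>j \<omega>. Y j (restrict (\<lambda>i. \<omega> !! i) (blk m j))) UNIV"
    by (rule S.indep_vars_compose2[OF I mY])
  moreover have "Y j (restrict (\<lambda>i. \<omega> !! i) (blk m j)) = g (stake m (sdrop (j*m) \<omega>))" for j \<omega>
  proof -
    have "map (restrict (\<lambda>i. \<omega> !! i) (blk m j)) [j*m..<j*m+m] = map (\<lambda>i. \<omega> !! i) [j*m..<j*m+m]"
      by (rule map_cong) (auto simp: blk_def)
    then have "Y j (restrict (\<lambda>i. \<omega> !! i) (blk m j)) = g (map (\<lambda>i. \<omega> !! i) [j*m..<j*m+m])"
      unfolding Y_def by (rule arg_cong)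
    then show ?thesis by (simp only: stake_sdrop_map)
  qed
  ultimately show ?thesis by simp
qed

lemma slln_blocks: fixes g :: "'i list \<Rightarrow> real"
  assumes m: "m \<ge> 1" and gb: "\<And>xs. length xs = m \<Longrightarrow> 0 \<le> g xs \<and> g xs \<le> C"
  shows "AE \<omega> in S. (\<lambda>q. (\<Sum>j<q. g (stake m (sdrop (j*m) \<omega>))) / real q) \<longlonglongrightarrow> S.expectation (\<lambda>\<omega>. g (stake m \<omega>))"
proof -
  define X where "X j \<omega> = g (stake m (sdrop (j*m) \<omega>))" for j \<omega>
  define \<mu> where "\<mu> = S.expectation (\<lambda>\<omega>. g (stake m \<omega>))"
  have X0: "X 0 = (\<lambda>\<omega>. g (stake m \<omega>))" by (rule ext) (simp add: X_def)
  have mX [measurable]: "X j \<in> borel_measurable S" for j unfolding X_def by (rule meas_fs)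
  have C0: "C \<ge> 0" using gb[of "replicate m undefined"] by simp
  have hoeff: "S.prob {\<omega>\<in>space S. \<epsilon> \<le> \<bar>(\<Sum>j\<in>{..<q}. X j \<omega>) / real q - \<mu>\<bar>} \<le> 2 * exp (- 2 * real q * \<epsilon>\<^sup>2 / (C + 1)\<^sup>2)"
    if q: "q \<ge> 1" and e: "\<epsilon> \<ge> 0" for q \<epsilon>
  proof -
    interpret H: Hoeffding_ineq_iid S "{..<q}" X "X 0" 0 "C + 1" \<mu>
    proof unfold_locales
      show "finite {..<q}" by simp
      show "S.indep_vars (\<lambda>_. borel) X {..<q}"
        using S.indep_vars_subset[OF indep_blocks[OF m, of g]] unfolding X_def by blast
      show "distr S borel (X i) = distr S borel (X 0)" for i
        unfolding X_def by (simp add: distr_shift[OF meas_f])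
      show "X 0 \<in> borel_measurable S" by simp
      show "AE x in S. X 0 x \<in> {0..C + 1}"
      proof (intro AE_I2)
        fix x show "X 0 x \<in> {0..C + 1}" using gb[of "stake m x"] by (simp add: X0)
      qed
      show "\<mu> \<equiv> S.expectation (X 0)" by (simp add: \<mu>_def X0)
    qed
    have "S.prob {\<omega>\<in>space S. \<epsilon> \<le> \<bar>(\<Sum>j\<in>{..<q}. X j \<omega>) / real (card {..<q}) - \<mu>\<bar>}
        \<le> 2 * exp (- 2 * real (card {..<q}) * \<epsilon>\<^sup>2 / (C + 1 - 0)\<^sup>2)"
      by (rule H.Hoeffding_ineq_abs_ge'[OF e]) (use C0 q in \<open>auto simp: lessThan_empty_iff\<close>)
    then show ?thesis by simp
  qed
  have ev: "AE \<omega> in S. eventually (\<lambda>q. \<bar>(\<Sum>j<q. X j \<omega>) / real q - \<mu>\<bar> < \<epsilon>) sequentially"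
    if e: "\<epsilon> > 0" for \<epsilon>
  proof -
    define A where "A q = (if q = 0 then {} else {\<omega>\<in>space S. \<epsilon> \<le> \<bar>(\<Sum>j\<in>{..<q}. X j \<omega>) / real q - \<mu>\<bar>})" for q
    have Am [measurable]: "A q \<in> sets S" for q
    proof (cases "q = 0")
      case True then show ?thesis by (simp add: A_def)
    next
      case False
      have "{\<omega>\<in>space S. \<epsilon> \<le> \<bar>(\<Sum>j\<in>{..<q}. X j \<omega>) / real q - \<mu>\<bar>} \<in> sets S" by measurable
      then show ?thesis using False by (simp add: A_def)
    qed
    define r where "r = exp (- 2 * \<epsilon>\<^sup>2 / (C + 1)\<^sup>2)"
    have r: "0 \<le> r" "r < 1" using e C0 by (auto simp: r_def)
    have bnd: "S.prob (A q) \<le> 2 * r ^ q" for q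
    proof (cases "q = 0")
      case True then show ?thesis by (simp add: A_def)
    next
      case False
      have "exp (- 2 * real q * \<epsilon>\<^sup>2 / (C + 1)\<^sup>2) = exp (real q * (- 2 * \<epsilon>\<^sup>2 / (C + 1)\<^sup>2))"
        by (simp add: algebra_simps)
      also have "\<dots> = r ^ q" unfolding r_def by (rule exp_of_nat_mult)
      finally show ?thesis using hoeff[of q \<epsilon>] False e by (simp add: A_def)
    qed
    have "summable (\<lambda>q. 2 * r ^ q)" using r by (intro summable_mult summable_geometric) auto
    then have sA: "summable (\<lambda>q. S.prob (A q))"
      by (rule summable_comparison_test') (use bnd in auto)
    have "AE \<omega> in S. eventually (\<lambda>q. \<omega> \<in> space S - A q) sequentially"
      by (rule borel_cantelli_AE1[OF Am _ sA]) (simp add: less_top[symmetric])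
    then show ?thesis
    proof (rule AE_mp, intro AE_I2 impI)
      fix \<omega> assume "eventually (\<lambda>q. \<omega> \<in> space S - A q) sequentially"
      moreover have "eventually (\<lambda>q. q \<ge> (1::nat)) sequentially" by (rule eventually_ge_at_top)
      ultimately show "eventually (\<lambda>q. \<bar>(\<Sum>j<q. X j \<omega>) / real q - \<mu>\<bar> < \<epsilon>) sequentially"
        by eventually_elim (auto simp: A_def space_S)
    qed
  qed
  have "AE \<omega> in S. \<forall>k::nat. eventually (\<lambda>q. \<bar>(\<Sum>j<q. X j \<omega>) / real q - \<mu>\<bar> < inverse (real (Suc k))) sequentially"
    by (subst AE_all_countable) (intro allI ev, simp)
  then show ?thesis
  proof (rule AE_mp, intro AE_I2 impI)
    fix \<omega> assume H: "\<forall>k::nat. eventually (\<lambda>q. \<bar>(\<Sum>j<q. X j \<omega>) / real q - \<mu>\<bar> < inverse (real (Suc k))) sequentially"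
    show "(\<lambda>q. (\<Sum>j<q. g (stake m (sdrop (j*m) \<omega>))) / real q) \<longlonglongrightarrow> S.expectation (\<lambda>\<omega>. g (stake m \<omega>))"
      unfolding tendsto_iff
    proof (intro allI impI)
      fix r :: real assume "r > 0"
      then obtain k where k: "inverse (real (Suc k)) < r" using reals_Archimedean by blast
      show "eventually (\<lambda>q. dist ((\<Sum>j<q. g (stake m (sdrop (j*m) \<omega>))) / real q) (S.expectation (\<lambda>\<omega>. g (stake m \<omega>))) < r) sequentially"
        using H[rule_format, of k] by eventually_elim (use k in \<open>auto simp: dist_real_def X_def \<mu>_def\<close>)
    qed
  qed
qed

end


(* ---- from Det.thy ---- *)


lemma det_lim:
  fixes a :: "nat \<Rightarrow> nat \<Rightarrow> real" and E :: "nat \<Rightarrow> real" and ch \<kappa> B :: real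
  assumes sub: "\<And>n n' k. a (n+n') k \<le> a n k + a n' (k+n)"
    and sup: "\<And>n n' k. a n k + a n' (k+n) - \<kappa> \<le> a (n+n') k"
    and bnd: "\<And>n k. 0 \<le> a n k \<and> a n k \<le> real n * B"
    and lim: "\<And>m. m \<ge> 1 \<Longrightarrow> (\<lambda>q. (\<Sum>j<q. a m (j*m)) / real q) \<longlonglongrightarrow> E m"
    and chi: "\<And>m. m \<ge> 1 \<Longrightarrow> ch \<le> E m / m \<and> (E m - \<kappa>) / m \<le> ch"
    and E0: "\<And>m. E m \<ge> 0"
    and k0: "\<kappa> \<ge> 0" and B0: "B \<ge> 0"
  shows "(\<lambda>n. a n 0 / real n) \<longlonglongrightarrow> ch"
proof -
  have U1: "a (q*m) 0 \<le> (\<Sum>j<q. a m (j*m))" for q m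
  proof (induction q)
    case 0 then show ?case using bnd[of 0 0] by simp
  next
    case (Suc q)
    have "a (Suc q * m) 0 = a (q*m + m) 0" by (simp add: add.commute)
    also have "\<dots> \<le> a (q*m) 0 + a m (0 + q*m)" by (rule sub)
    also have "\<dots> \<le> (\<Sum>j<q. a m (j*m)) + a m (q*m)" using Suc by simp
    finally show ?case by simp
  qed
  have L1: "(\<Sum>j<q. a m (j*m)) - real q * \<kappa> \<le> a (q*m) 0" for q m
  proof (induction q)
    case 0 then show ?case using bnd[of 0 0] by simp
  next
    case (Suc q)
    have "(\<Sum>j<Suc q. a m (j*m)) - real (Suc q) * \<kappa> = ((\<Sum>j<q. a m (j*m)) - real q * \<kappa>) + a m (0 + q*m) - \<kappa>"
      by (simp add: algebra_simps)
    also have "\<dots> \<le> a (q*m) 0 + a m (0 + q*m) - \<kappa>" using Suc by simp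
    also have "\<dots> \<le> a (q*m + m) 0" by (rule sup)
    also have "q*m + m = Suc q * m" by simp
    finally show ?case .
  qed
  show ?thesis
    unfolding tendsto_iff
  proof (intro allI impI)
    fix \<epsilon> :: real assume e: "\<epsilon> > 0"
    define m :: nat where "m = nat \<lceil>3 * (\<kappa> + 1) / \<epsilon>\<rceil> + 1"
    have m1: "m \<ge> 1" by (simp add: m_def)
    have mpos: "real m > 0" using m1 by simp
    have "3 * (\<kappa> + 1) / \<epsilon> < real m" unfolding m_def by linarith
    then have mk: "(\<kappa> + 1) / real m < \<epsilon> / 3" using e mpos k0
      by (simp add: field_simps)
    have "eventually (\<lambda>q. dist ((\<Sum>j<q. a m (j*m)) / real q) (E m) < 1) sequentially"
      using lim[OF m1] unfolding tendsto_iff by simp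
    then obtain Q where Q: "\<And>q. q \<ge> Q \<Longrightarrow> \<bar>(\<Sum>j<q. a m (j*m)) / real q - E m\<bar> < 1"
      by (auto simp: eventually_sequentially dist_real_def)
    define X where "X = E m - 1 - \<kappa>"
    define N :: nat where "N = m * (Q + 1) + nat \<lceil>3 * (real m * B + \<bar>X\<bar> + \<kappa>) / \<epsilon>\<rceil> + 1"
    show "eventually (\<lambda>n. dist (a n 0 / real n) ch < \<epsilon>) sequentially"
      unfolding eventually_sequentially
    proof (intro exI allI impI)
      fix n assume nN: "N \<le> n"
      define q where "q = n div m"
      define r where "r = n mod m"
      have nqr: "n = q * m + r" by (simp add: q_def r_def)
      have rm: "r < m" using m1 by (simp add: r_def)
      have "m * (Q + 1) \<le> n" using nN by (simp add: N_def)
      then have qQ: "q \<ge> Q + 1" unfolding q_def using m1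
        by (metis div_le_mono div_mult_self1_is_m mult.commute zero_less_one less_le_trans)
      have q1: "q \<ge> 1" "q \<ge> Q" using qQ by auto
      have npos: "real n > 0" using nN by (simp add: N_def)
      have "3 * (real m * B + \<bar>X\<bar> + \<kappa>) / \<epsilon> < real n"
        using nN unfolding N_def by linarith
      then have nbig: "(real m * B + \<bar>X\<bar> + \<kappa>) / real n < \<epsilon> / 3" using e npos
        by (simp add: field_simps)
      define s where "s = (\<Sum>j<q. a m (j*m))"
      have sQ: "\<bar>s / real q - E m\<bar> < 1" using Q q1 by (simp add: s_def)
      have qpos: "real q > 0" using q1 by simp
      have sup1: "s < real q * (E m + 1)" using sQ qpos by (simp add: abs_less_iff field_simps)
      have slo: "real q * (E m - 1) < s" using sQ qpos by (simp add: abs_less_iff field_simps)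
      have rn: "real n = real q * real m + real r" using nqr by simp
      have qmn: "real q * real m \<le> real n" using rn by simp
      have nqm: "real n < real q * real m + real m" using rn rm by simp
      (* upper bound *)
      have an_up: "a n 0 \<le> s + real m * B"
      proof -
        have "a n 0 \<le> a (q*m) 0 + a r (0 + q*m)" using sub[of "q*m" r 0] nqr by simp
        also have "\<dots> \<le> s + real r * B" using U1[where q=q and m=m] bnd[of r "q*m"] by (simp add: s_def)
        also have "\<dots> \<le> s + real m * B" using rm B0 by (intro add_left_mono mult_right_mono) auto
        finally show ?thesis .
      qed
      have an_lo: "s - real q * \<kappa> - \<kappa> \<le> a n 0"
      proof -
        have "s - real q * \<kappa> - \<kappa> \<le> a (q*m) 0 + a r (0 + q*m) - \<kappa>"
          using L1[where q=q and m=m] bnd[of r "q*m"] by (simp add: s_def)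
        also have "\<dots> \<le> a n 0" using sup[of "q*m" 0 r] nqr by simp
        finally show ?thesis .
      qed
      have chm: "ch \<le> E m / real m" "(E m - \<kappa>) / real m \<le> ch" using chi[OF m1] by auto
      (* upper *)
      have up: "a n 0 / real n < ch + \<epsilon>"
      proof -
        have "real q * (E m + 1) \<le> (real n / real m) * (E m + 1)"
          using qmn mpos E0[of m] by (intro mult_right_mono) (auto simp: field_simps)
        then have "a n 0 < (real n / real m) * (E m + 1) + real m * B"
          using an_up sup1 by linarith
        then have u1: "a n 0 / real n < (E m + 1) / real m + real m * B / real n"
          using npos mpos by (simp add: field_simps)
        have u2: "(E m + 1) / real m = (E m - \<kappa>) / real m + (\<kappa> + 1) / real m"
          by (simp add: add_divide_distrib[symmetric])
        have u3: "real m * B / real n \<le> (real m * B + \<bar>X\<bar> + \<kappa>) / real n"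
          using npos k0 by (intro divide_right_mono) auto
        show ?thesis using u1 u2 u3 chm mk nbig e by linarith
      qed
      have lo: "ch - \<epsilon> < a n 0 / real n"
      proof -
        have "real q * X - \<kappa> < a n 0" using an_lo slo by (simp add: X_def algebra_simps)
        then have A1: "(real q * X - \<kappa>) / real n < a n 0 / real n" using npos by (simp add: divide_strict_right_mono)
        have "\<bar>real q / real n - 1 / real m\<bar> \<le> 1 / real n"
        proof -
          have "\<bar>real q * real m - real n\<bar> \<le> real m" using qmn nqm by linarith
          then have "\<bar>real q * real m - real n\<bar> / (real n * real m) \<le> real m / (real n * real m)"
            using npos mpos by (intro divide_right_mono) auto
          moreover have "real q / real n - 1 / real m = (real q * real m - real n) / (real n * real m)"
            using npos mpos by (simp add: field_simps)
          ultimately show ?thesis using npos mpos by (simp add: abs_divide abs_mult)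
        qed
        then have "\<bar>X\<bar> * \<bar>real q / real n - 1 / real m\<bar> \<le> \<bar>X\<bar> * (1 / real n)" by (intro mult_left_mono) auto
        then have "\<bar>real q * X / real n - X / real m\<bar> \<le> \<bar>X\<bar> / real n"
          by (simp add: abs_mult[symmetric] algebra_simps diff_divide_distrib)
        then have A2: "X / real m - \<bar>X\<bar> / real n \<le> real q * X / real n" by (simp add: abs_diff_le_iff)
        have A3: "X / real m = (E m - \<kappa>) / real m - 1 / real m" by (simp add: X_def diff_divide_distrib)
        have A4: "ch \<le> (E m - \<kappa>) / real m + \<kappa> / real m" using chm by (simp add: diff_divide_distrib)
        have A5: "(\<kappa> + 1) / real m = \<kappa> / real m + 1 / real m" by (simp add: add_divide_distrib)
        have A6: "(real q * X - \<kappa>) / real n = real q * X / real n - \<kappa> / real n" by (simp add: diff_divide_distrib)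
        have A7: "(real m * B + \<bar>X\<bar> + \<kappa>) / real n \<ge> \<bar>X\<bar> / real n + \<kappa> / real n"
          using npos B0 mpos by (simp add: add_divide_distrib[symmetric] divide_right_mono)
        show ?thesis using A1 A2 A3 A4 A5 A6 A7 mk nbig e by linarith
      qed
      show "dist (a n 0 / real n) ch < \<epsilon>" using up lo by (simp add: dist_real_def abs_less_iff)
    qed
  qed
qed


(* ---- from Prob3.thy ---- *)


context strm begin

theorem abstract_conv:
  fixes f :: "'i list \<Rightarrow> real" and \<kappa> B :: real
  assumes sub: "\<And>xs ys. f (xs @ ys) \<le> f xs + f ys"
    and sup: "\<And>xs ys. f xs + f ys - \<kappa> \<le> f (xs @ ys)"
    and bnd: "\<And>xs. 0 \<le> f xs \<and> f xs \<le> real (length xs) * B"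
  shows "\<exists>ch. AE \<omega> in S. (\<lambda>n. f (stake n \<omega>) / real n) \<longlonglongrightarrow> ch"
proof -
  have f0: "f [] = 0" using bnd[of "[]"] by simp
  have k0: "\<kappa> \<ge> 0" using sup[of "[]" "[]"] f0 by simp
  have B0: "B \<ge> 0" using bnd[of "[undefined]"] by simp
  define E where "E n = S.expectation (\<lambda>\<omega>. f (stake n \<omega>))" for n
  have int: "integrable S (\<lambda>\<omega>. f (stake n (sdrop k \<omega>)))" for n k
  proof (rule S.integrable_const_bound[where B = "real n * B"])
    show "AE x in S. norm (f (stake n (sdrop k x))) \<le> real n * B"
    proof (intro AE_I2)
      fix x show "norm (f (stake n (sdrop k x))) \<le> real n * B"
        using bnd[of "stake n (sdrop k x)"] by (simp add: abs_of_nonneg)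
    qed
  qed simp
  have shift: "S.expectation (\<lambda>\<omega>. f (stake m (sdrop n \<omega>))) = E m" for m n
    unfolding E_def by (rule integral_shift[OF meas_f])
  have Esub: "E (n + m) \<le> E n + E m" for n m
  proof -
    have "E (n + m) \<le> S.expectation (\<lambda>\<omega>. f (stake n \<omega>) + f (stake m (sdrop n \<omega>)))"
      unfolding E_def
      using int[of "n+m" 0] int[of n 0] int[of m n]
      by (intro integral_mono) (auto simp: sub stake_add[symmetric] simp del: stake_add)
    also have "\<dots> = E n + E m" using int[of n 0] int[of m n]
      by (simp add: shift E_def)
    finally show ?thesis .
  qed
  have Esup: "E n + E m - \<kappa> \<le> E (n + m)" for n m
  proof -
    have "E n + E m - \<kappa> = S.expectation (\<lambda>\<omega>. f (stake n \<omega>) + f (stake m (sdrop n \<omega>)) - \<kappa>)"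
      using int[of n 0] int[of m n] by (simp add: shift E_def S.prob_space)
    also have "\<dots> \<le> E (n + m)"
      unfolding E_def
      using int[of "n+m" 0] int[of n 0] int[of m n]
      by (intro integral_mono) (auto simp: sup stake_add[symmetric] simp del: stake_add)
    finally show ?thesis .
  qed
  have E0: "E m \<ge> 0" for m unfolding E_def
  proof (intro integral_nonneg_AE AE_I2)
    fix x show "0 \<le> f (stake m x)" using bnd[of "stake m x"] by simp
  qed
  have Ez: "E 0 = 0" by (simp add: E_def f0)
  have Eup: "E (k * j) \<le> real k * E j" for k j
  proof (induction k)
    case 0 then show ?case by (simp add: Ez)
  next
    case (Suc k) then show ?case using Esub[of j "k*j"] by (simp add: algebra_simps)
  qed
  have Elo: "real k * (E m - \<kappa>) \<le> E (k * m)" for k m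
  proof (induction k)
    case 0 then show ?case by (simp add: Ez)
  next
    case (Suc k) then show ?case using Esup[of m "k*m"] by (simp add: algebra_simps)
  qed
  define ch where "ch = Inf ((\<lambda>m. E m / real m) ` {1..})"
  have bdd: "bdd_below ((\<lambda>m. E m / real m) ` {1..})"
    by (rule bdd_belowI[of _ 0]) (use E0 in auto)
  have chi: "ch \<le> E m / real m \<and> (E m - \<kappa>) / real m \<le> ch" if m: "m \<ge> 1" for m
  proof
    show "ch \<le> E m / real m" unfolding ch_def by (rule cInf_lower[OF _ bdd]) (use m in auto)
    show "(E m - \<kappa>) / real m \<le> ch" unfolding ch_def
    proof (rule cInf_greatest)
      show "(\<lambda>m. E m / real m) ` {1..} \<noteq> {}" by auto
      fix y assume "y \<in> (\<lambda>m. E m / real m) ` {1..}"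
      then obtain j where j: "j \<ge> 1" "y = E j / real j" by auto
      have "real j * (E m - \<kappa>) \<le> real m * E j"
        using Elo[of j m] Eup[of m j] by (simp add: mult.commute)
      then have ineq: "real j * (E m - \<kappa>) \<le> real m * E j" .
      have jm: "real j * real m > 0" using j m by simp
      have "(E m - \<kappa>) / real m = (real j * (E m - \<kappa>)) / (real j * real m)" using j by simp
      also have "\<dots> \<le> (real m * E j) / (real j * real m)"
        using ineq jm by (intro divide_right_mono) auto
      also have "\<dots> = E j / real j" using m by simp
      finally show "(E m - \<kappa>) / real m \<le> y" using j by simp
    qed
  qed
  have "AE \<omega> in S. \<forall>k::nat. (\<lambda>q. (\<Sum>j<q. f (stake (Suc k) (sdrop (j * Suc k) \<omega>))) / real q) \<longlonglongrightarrow> E (Suc k)"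
    unfolding AE_all_countable E_def
  proof (intro allI)
    fix k :: nat
    show "AE \<omega> in S. (\<lambda>q. (\<Sum>j<q. f (stake (Suc k) (sdrop (j * Suc k) \<omega>))) / real q) \<longlonglongrightarrow> S.expectation (\<lambda>\<omega>. f (stake (Suc k) \<omega>))"
    proof (rule slln_blocks[where C = "real (Suc k) * B"])
      fix xs :: "'i list" assume "length xs = Suc k"
      then show "0 \<le> f xs \<and> f xs \<le> real (Suc k) * B" using bnd[of xs] by simp
    qed simp
  qed
  then have "AE \<omega> in S. (\<lambda>n. f (stake n \<omega>) / real n) \<longlonglongrightarrow> ch"
  proof (rule AE_mp, intro AE_I2 impI)
    fix \<omega> assume H: "\<forall>k::nat. (\<lambda>q. (\<Sum>j<q. f (stake (Suc k) (sdrop (j * Suc k) \<omega>))) / real q) \<longlonglongrightarrow> E (Suc k)"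
    define a where "a n k = f (stake n (sdrop k \<omega>))" for n k
    have "(\<lambda>n. a n 0 / real n) \<longlonglongrightarrow> ch"
    proof (rule det_lim[where E = E and \<kappa> = \<kappa> and B = B])
      show "a (n + n') k \<le> a n k + a n' (k + n)" for n n' k
        using sub[of "stake n (sdrop k \<omega>)" "stake n' (sdrop n (sdrop k \<omega>))"]
        by (simp add: a_def stake_add[symmetric] del: stake_add)
      show "a n k + a n' (k + n) - \<kappa> \<le> a (n + n') k" for n n' k
        using sup[of "stake n (sdrop k \<omega>)" "stake n' (sdrop n (sdrop k \<omega>))"]
        by (simp add: a_def stake_add[symmetric] del: stake_add)
      show "0 \<le> a n k \<and> a n k \<le> real n * B" for n k using bnd[of "stake n (sdrop k \<omega>)"] by (simp add: a_def)
      show "(\<lambda>q. (\<Sum>j<q. a m (j * m)) / real q) \<longlonglongrightarrow> E m" if "m \<ge> 1" for m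
      proof -
        have "Suc 0 \<le> m" using that by simp
        then obtain k where "m = Suc k" by (metis Suc_le_D)
        then show ?thesis using H by (simp add: a_def)
      qed
      show "ch \<le> E m / real m \<and> (E m - \<kappa>) / real m \<le> ch" if "m \<ge> 1" for m using chi that by blast
    qed (use E0 k0 B0 in auto)
    then show "(\<lambda>n. f (stake n \<omega>) / real n) \<longlonglongrightarrow> ch" by (simp add: a_def)
  qed
  then show ?thesis by blast
qed

end


(* ---- from Final.thy ---- *)


lemma phi_word_eq: assumes "\<And>i. det (A i) = 1" "w \<noteq> []"
  shows "phi_word A w = phi (mat_word A w)"
  using assms(2)
proof (induction w)
  case Nil then show ?case by simp
next
  case (Cons i w)
  show ?case
  proof (cases "w = []")
    case True then show ?thesis by (simp add: phi_word_def mat_word_def)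
  next
    case False
    have dw: "det (mat_word A w) = 1"
      by (induction w) (simp_all add: mw_Nil mw_Cons det_mul assms(1) det_I)
    have "phi_word A (i # w) = phi (A i) \<circ> phi_word A w" by (simp add: phi_word_def)
    also have "\<dots> = phi (A i) \<circ> phi (mat_word A w)" using Cons.IH False by simp
    also have "\<dots> = phi (A i ** mat_word A w)"
      by (rule ext) (simp add: phi_comp assms(1) dw)
    finally show ?thesis by (simp add: mw_Cons)
  qed
qed

theorem lemma3p5:
  fixes A :: "'i::finite \<Rightarrow> real^2^2" and U :: "complex set" and p :: "'i pmf"
  assumes "\<And>i. det (A i) = 1"
    and "strictly_invariant_multicone A U"
    and "\<And>i. pmf p i > 0"
  shows "\<exists>\<chi>A. (AE \<omega> in stream_space (measure_pmf p).
              (\<lambda>n. ln (onorm ((*v) (mat_word A (stake n \<omega>)))) / real n) \<longlonglongrightarrow> \<chi>A)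
          \<and> (\<forall>x0. rp_emb x0 \<in> U \<longrightarrow>
              (AE \<omega> in stream_space (measure_pmf p).
                (\<lambda>n. - ln \<bar>rp_deriv (phi_word A (stake n \<omega>)) x0\<bar> / real n) \<longlonglongrightarrow> 2 * \<chi>A))"
proof -
  interpret mc A U using assms(1,2) by unfold_locales
  interpret strm p .
  obtain c where c: "c > 0" "c \<le> 1"
    and K: "\<And>w v. v \<noteq> 0 \<Longrightarrow> sqd v \<in> closure U \<Longrightarrow>
      c * onorm ((*v) (mat_word A w)) * norm v \<le> norm (mat_word A w *v v)"
    using KEY by blast
  define N where "N w = onorm ((*v) (mat_word A w))" for w
  define f where "f w = ln (N w)" for w
  have N1: "N w \<ge> 1" for w unfolding N_def by (rule nrm_ge1[OF det_mw])
  have Nmul: "N (xs @ ys) \<le> N xs * N ys" for xs ys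
    unfolding N_def mw_append by (rule nrm_mul)
  obtain v0 where v0: "norm v0 = 1" "sqd v0 \<in> U" using v0_ex by blast
  have Nsup: "c\<^sup>2 * (N xs * N ys) \<le> N (xs @ ys)" for xs ys
  proof -
    have v0nz: "v0 \<noteq> 0" using v0 by auto
    define x where "x = mat_word A ys *v v0"
    have xnz: "x \<noteq> 0" unfolding x_def using mv_nz det_mw v0nz by simp
    have sx: "sqd x \<in> closure U" unfolding x_def using invw[OF v0nz v0(2)] closure_subset by blast
    have k1: "c * N xs * norm x \<le> norm (mat_word A xs *v x)" unfolding N_def by (rule K[OF xnz sx])
    have k2: "c * N ys \<le> norm x" using K[OF v0nz, of ys] v0 closure_subset by (auto simp: N_def x_def)
    have "norm (mat_word A xs *v x) = norm (mat_word A (xs @ ys) *v v0)"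
      by (simp add: x_def mw_append matrix_vector_mul_assoc)
    also have "\<dots> \<le> N (xs @ ys) * norm v0" unfolding N_def by (rule nrm_bound)
    finally have k3: "norm (mat_word A xs *v x) \<le> N (xs @ ys)" using v0 by simp
    have "c\<^sup>2 * (N xs * N ys) = (c * N xs) * (c * N ys)" by (simp add: power2_eq_square algebra_simps)
    also have "\<dots> \<le> (c * N xs) * norm x" using k2 c N1[of xs] by (intro mult_left_mono) auto
    also have "\<dots> \<le> N (xs @ ys)" using k1 k3 by simp
    finally show ?thesis .
  qed
  have NL: "N w \<le> L ^ length w" for w
  proof (induction w)
    case Nil then show ?case by (simp add: N_def mw_Nil nrm_id)
  next
    case (Cons i w)
    have "N (i # w) \<le> onorm ((*v) (A i)) * N w" unfolding N_def mw_Cons by (rule nrm_mul)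
    also have "\<dots> \<le> L * L ^ length w"
      using L_ge[of i] Cons N1[of w] nrm_nonneg[of "A i"] by (intro mult_mono) auto
    finally show ?case by simp
  qed
  have Npos: "N w > 0" for w using N1[of w] by simp
  have "\<exists>ch. AE \<omega> in S. (\<lambda>n. f (stake n \<omega>) / real n) \<longlonglongrightarrow> ch"
  proof (rule abstract_conv[where \<kappa> = "- 2 * ln c" and B = "ln L"])
    show "f (xs @ ys) \<le> f xs + f ys" for xs ys
    proof -
      have "ln (N (xs @ ys)) \<le> ln (N xs * N ys)" using Nmul Npos by (simp add: ln_le_cancel_iff)
      then show ?thesis using Npos[of xs] Npos[of ys] by (simp add: f_def ln_mult)
    qed
    show "f xs + f ys - - 2 * ln c \<le> f (xs @ ys)" for xs ys
    proof -
      have "ln (c\<^sup>2 * (N xs * N ys)) \<le> ln (N (xs @ ys))" using Nsup[of xs ys] Npos c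
        by (simp add: ln_le_cancel_iff)
      moreover have "ln (c\<^sup>2 * (N xs * N ys)) = 2 * ln c + ln (N xs) + ln (N ys)"
        using Npos[of xs] Npos[of ys] c by (simp add: ln_mult ln_realpow)
      ultimately show ?thesis by (simp add: f_def)
    qed
    show "0 \<le> f xs \<and> f xs \<le> real (length xs) * ln L" for xs
    proof
      show "0 \<le> f xs" using N1[of xs] by (simp add: f_def)
      have "ln (N xs) \<le> ln (L ^ length xs)" using NL[of xs] Npos[of xs] by simp
      then show "f xs \<le> real (length xs) * ln L" by (simp add: f_def ln_realpow)
    qed
  qed
  then obtain ch where ch: "AE \<omega> in S. (\<lambda>n. f (stake n \<omega>) / real n) \<longlonglongrightarrow> ch" by blast
  have part2: "AE \<omega> in S. (\<lambda>n. - ln \<bar>rp_deriv (phi_word A (stake n \<omega>)) x0\<bar> / real n) \<longlonglongrightarrow> 2 * ch"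
    if x0: "rp_emb x0 \<in> U" for x0
    using ch
  proof (rule AE_mp, intro AE_I2 impI)
    fix \<omega> assume lim: "(\<lambda>n. f (stake n \<omega>) / real n) \<longlonglongrightarrow> ch"
    define u where "u = uvec x0"
    have u: "u \<noteq> 0" "norm u = 1" "sqd u \<in> closure U"
      using uvec_nz norm_uvec x0 closure_subset by (auto simp: u_def sqd_uvec)
    define b where "b n = ln (norm (mat_word A (stake n \<omega>) *v u))" for n
    have bb: "ln c + f (stake n \<omega>) \<le> b n \<and> b n \<le> f (stake n \<omega>)" for n
    proof -
      let ?M = "mat_word A (stake n \<omega>)"
      have lo: "c * N (stake n \<omega>) \<le> norm (?M *v u)" using K[OF u(1) u(3), of "stake n \<omega>"] u by (simp add: N_def)
      have hi: "norm (?M *v u) \<le> N (stake n \<omega>)" using nrm_bound[of ?M u] u by (simp add: N_def)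
      have pos: "c * N (stake n \<omega>) > 0" using c Npos by simp
      have "ln (c * N (stake n \<omega>)) \<le> b n" unfolding b_def using lo pos by (subst ln_le_cancel_iff) auto
      moreover have "b n \<le> f (stake n \<omega>)" unfolding b_def f_def using hi lo pos by (subst ln_le_cancel_iff) auto
      moreover have "ln (c * N (stake n \<omega>)) = ln c + f (stake n \<omega>)" using c Npos[of "stake n \<omega>"] by (simp add: ln_mult f_def)
      ultimately show ?thesis by simp
    qed
    have eq: "- ln \<bar>rp_deriv (phi_word A (stake n \<omega>)) x0\<bar> / real n
        = 2 * (f (stake n \<omega>) / real n) + 2 * ((b n - f (stake n \<omega>)) / real n)" if n: "n \<ge> 1" for n
    proof -
      let ?M = "mat_word A (stake n \<omega>)"
      have ne: "stake n \<omega> \<noteq> []" using n by (cases n) auto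
      have "rp_deriv (phi_word A (stake n \<omega>)) x0 = 1 / (norm (?M *v uvec x0))\<^sup>2"
        using phi_word_eq[OF assms(1) ne] rp_deriv_phi[OF det_mw] by simp
      moreover have "norm (?M *v uvec x0) > 0" using mv_nz[of ?M "uvec x0"] det_mw uvec_nz by simp
      ultimately have "- ln \<bar>rp_deriv (phi_word A (stake n \<omega>)) x0\<bar> = 2 * b n"
        by (simp add: b_def u_def ln_div ln_realpow)
      then show ?thesis by (simp add: diff_divide_distrib algebra_simps)
    qed
    have d0: "(\<lambda>n. (b n - f (stake n \<omega>)) / real n) \<longlonglongrightarrow> 0"
    proof (rule tendsto_sandwich[of "\<lambda>n. ln c / real n" _ _ "\<lambda>_. 0"])
      show "eventually (\<lambda>n. ln c / real n \<le> (b n - f (stake n \<omega>)) / real n) sequentially"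
        using bb by (intro always_eventually allI divide_right_mono) (auto simp: algebra_simps)
      show "eventually (\<lambda>n. (b n - f (stake n \<omega>)) / real n \<le> 0) sequentially"
        using bb by (intro always_eventually allI divide_nonpos_nonneg) auto
      show "(\<lambda>n. ln c / real n) \<longlonglongrightarrow> 0" by (rule lim_const_over_n)
    qed simp
    have "(\<lambda>n. 2 * (f (stake n \<omega>) / real n) + 2 * ((b n - f (stake n \<omega>)) / real n)) \<longlonglongrightarrow> 2 * ch + 2 * 0"
      by (intro tendsto_add tendsto_mult_left lim d0)
    then have "(\<lambda>n. 2 * (f (stake n \<omega>) / real n) + 2 * ((b n - f (stake n \<omega>)) / real n)) \<longlonglongrightarrow> 2 * ch" by simp
    moreover have "eventually (\<lambda>n. 2 * (f (stake n \<omega>) / real n) + 2 * ((b n - f (stake n \<omega>)) / real n)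
        = - ln \<bar>rp_deriv (phi_word A (stake n \<omega>)) x0\<bar> / real n) sequentially"
      using eventually_ge_at_top[of "1::nat"] by eventually_elim (rule eq[symmetric])
    ultimately show "(\<lambda>n. - ln \<bar>rp_deriv (phi_word A (stake n \<omega>)) x0\<bar> / real n) \<longlonglongrightarrow> 2 * ch"
      by (rule Lim_transform_eventually)
  qed
  show ?thesis
    using ch part2 unfolding S_def f_def N_def by blast
qed


end
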